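(* Let $\mathbf{B}$ be a binomial ring and $n\ge0$. The Ariadne functor $A_n\colon\mathfrak{Laby}\to\mathfrak{MSet}_n$ factors through the quotient category $\mathfrak{Laby}_n$, producing a functor $A_n\colon\mathfrak{Laby}_n\to\mathfrak{MSet}_n$.
   Context: Binomial ring: commutative unital, torsion-free as an abelian group, with $\binom ak=a(a-1)\cdots(a-k+1)/k!\in\mathbf{B}$ for all $a\in\mathbf{B}$, $k\ge0$. Multi-sets, multations, $\mathfrak{MSet}_n$: a multi-set is a finite set with positive integer multiplicities, $|A|$ the sum of multiplicities. A multation $\mu\colon A\to B$ ($|A|=|B|=n$) is a multi-set of pairs with first-coordinate multi-set $A$ and second-coordinate multi-set $B$. $\mathfrak{MSet}_n$ has objects formal direct sums of multi-sets of cardinality $n$, morphisms the free $\mathbf{B}$-modules on multations, composition $\mu\circ\nu=\sum_K\frac{\prod_{(a,c)}m_{K_{13}}(a,c)!}{\prod m_K(a,b,c)!}K_{13}$ over multi-sets of triples $K$ with $(1,2)$-projection $\nu$ and $(2,3)$-projection $\mu$. $\prod_j[a_j;b_j]^{[m_j]}$ (distinct pairs) is the multation with $(a_j,b_j)$ of multiplicity $m_j$, with $[a;b]^{[i]}[a;b]^{[j]}=\binom{i+j}i[a;b]^{[i+j]}$. Mazes, $\mathfrak{Laby}$: a passage $p\colon x\to y$ carries label $\overline p\in\mathbf{B}$; a maze $P\colon X\to Y$ between finite sets is a finite multi-set of passages with every element of $X$ a source and of $Y$ a target; $|P|$ is its number of passages with multiplicity. $\mathfrak{Laby}$: objects formal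 finite direct sums of finite sets; morphisms generated by mazes modulo $P\cup\{x\xrightarrow0y\}=0$ and $P\cup\{x\xrightarrow{a+b}y\}=P\cup\{x\xrightarrow ay\}+P\cup\{x\xrightarrow by\}+P\cup\{x\xrightarrow ay,x\xrightarrow by\}$; composition $P\circ Q=\sum_{U\sqsubseteq P\boxtimes Q}U$ ($U$ a sub-multi-set of composable pairs using every passage occurrence of $P$ and $Q$, read as the maze with passages $x\xrightarrow{\overline p\overline q}z$). $\mathfrak{Laby}_n$ is the quotient of $\mathfrak{Laby}$ by (III) $P=0$ whenever $|P|>n$ and (IV) $P=\sum_d\prod_p\binom{\overline p}{d_p}I_d$, $d$ ranging over assignments of integers $d_p\ge1$ to the passage occurrences $p$ of $P$, $I_d$ the maze with $d_p$ passages from the source to the target of $p$ labelled $1$. Ariadne functor: $A_n(X)=\bigoplus_AA$ over multi-sets $A$ with support exactly $X$ and $|A|=n$; for a maze $P$ with passage occurrences $p\colon x_p\to y_p$, $A_n(P)=\sum_d\prod_p\overline p^{\,d_p}[x_p;y_p]^{[d_p]}$ over $d_p\ge1$ with $\sum d_p=n$. *)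

theory Defs
  imports Main "HOL-Library.Multiset"
begin

text \<open>A binomial ring: commutative unital, torsion-free as an abelian group,
  and closed under the binomial operations a choose k.\<close>

class binomial_ring = comm_ring_1 +
  assumes torsion_free: "\<And>(k::nat) a. 0 < k \<Longrightarrow> of_nat k * a = 0 \<Longrightarrow> a = 0"
  and binom_closed: "\<And>a (k::nat). \<exists>c. of_nat (fact k) * c = (\<Prod>i<k. a - of_nat i)"

definition bchoose :: "'b::binomial_ring \<Rightarrow> nat \<Rightarrow> 'b" where
  "bchoose a k = (THE c. of_nat (fact k) * c = (\<Prod>i<k. a - of_nat i))"

text \<open>A passage x -> y with label l is the triple (x, l, y).\<close>
type_synonym ('a, 'b) passage = "'a \<times> 'b \<times> 'a"
type_synonym ('a, 'b) maze = "('a, 'b) passage multiset"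
text \<open>Formal B-linear combinations of mazes (finitely supported functions).\<close>
type_synonym ('a, 'b) laby = "('a, 'b) maze \<Rightarrow> 'b"
text \<open>Multations A -> B: multi-sets of pairs; morphisms of MSet_n are
  finitely supported B-valued functions on multations.\<close>
type_synonym 'a multation = "('a \<times> 'a) multiset"

definition src :: "('a, 'b) passage \<Rightarrow> 'a" where "src p = fst p"
definition lbl :: "('a, 'b) passage \<Rightarrow> 'b" where "lbl p = fst (snd p)"
definition tgt :: "('a, 'b) passage \<Rightarrow> 'a" where "tgt p = snd (snd p)"

definition is_maze :: "'a set \<Rightarrow> 'a set \<Rightarrow> ('a, 'b) maze \<Rightarrow> bool" where
  "is_maze X Y P \<longleftrightarrow> src ` set_mset P = X \<and> tgt ` set_mset P = Y"

definition maze_list :: "('a, 'b) maze \<Rightarrow> ('a, 'b) passage list" where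
  "maze_list P = (SOME ps. mset ps = P)"

text \<open>Sub-multi-sets U of P \<boxtimes> Q using every passage occurrence, with occurrences
  distinguished by their index in an enumeration (ps for P, qs for Q).\<close>
definition comp_index_sets ::
  "('a, 'b) passage list \<Rightarrow> ('a, 'b) passage list \<Rightarrow> (nat \<times> nat) set set" where
  "comp_index_sets ps qs =
     {U. U \<subseteq> {(i, j). i < length ps \<and> j < length qs \<and> src (ps ! i) = tgt (qs ! j)}
         \<and> fst ` U = {..<length ps} \<and> snd ` U = {..<length qs}}"

definition comp_result ::
  "('a, 'b::times) passage list \<Rightarrow> ('a, 'b) passage list \<Rightarrow> (nat \<times> nat) set \<Rightarrow> ('a, 'b) maze" where
  "comp_result ps qs U =
     image_mset (\<lambda>(i, j). (src (qs ! j), lbl (ps ! i) * lbl (qs ! j), tgt (ps ! i))) (mset_set U)"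

text \<open>Composition P \<circ> Q of mazes (Q first), as a formal combination.\<close>
definition maze_comp :: "('a, 'b::comm_ring_1) maze \<Rightarrow> ('a, 'b) maze \<Rightarrow> ('a, 'b) laby" where
  "maze_comp P Q M =
     of_nat (card {U \<in> comp_index_sets (maze_list P) (maze_list Q).
                     comp_result (maze_list P) (maze_list Q) U = M})"

definition supp :: "('a, 'b::zero) laby \<Rightarrow> ('a, 'b) maze set" where
  "supp F = {P. F P \<noteq> 0}"

text \<open>Morphisms X -> Y of the free category underlying Laby.\<close>
definition laby_mor :: "'a set \<Rightarrow> 'a set \<Rightarrow> ('a, 'b::zero) laby \<Rightarrow> bool" where
  "laby_mor X Y F \<longleftrightarrow> finite (supp F) \<and> (\<forall>P \<in> supp F. is_maze X Y P)"

definition laby_comp :: "('a, 'b::comm_ring_1) laby \<Rightarrow> ('a, 'b) laby \<Rightarrow> ('a, 'b) laby" where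
  "laby_comp F G M = (\<Sum>P\<in>supp F. \<Sum>Q\<in>supp G. F P * G Q * maze_comp P Q M)"

definition maze_comb :: "('a, 'b) maze \<Rightarrow> ('a, 'b::{zero,one}) laby" where
  "maze_comb P M = (if M = P then 1 else 0)"

definition assignments :: "nat \<Rightarrow> 'c list \<Rightarrow> nat list set" where
  "assignments m ps = {ds. length ds = length ps \<and> (\<forall>d\<in>set ds. 1 \<le> d) \<and> sum_list ds \<le> m}"

definition unit_maze :: "('a, 'b::one) passage list \<Rightarrow> nat list \<Rightarrow> ('a, 'b) maze" where
  "unit_maze ps ds = mset (concat (map2 (\<lambda>p d. replicate d (src p, 1, tgt p)) ps ds))"

text \<open>Relation (IV), truncated to assignments with total \<le> n (the remaining terms
  vanish by relation (III)).\<close>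
definition rel_IV :: "nat \<Rightarrow> ('a, 'b::binomial_ring) maze \<Rightarrow> ('a, 'b) laby" where
  "rel_IV n P M =
     maze_comb P M -
     (\<Sum>ds\<in>assignments n (maze_list P).
        (\<Prod>(p, d)\<leftarrow>zip (maze_list P) ds. bchoose (lbl p) d) * maze_comb (unit_maze (maze_list P) ds) M)"

definition laby_n_rel :: "nat \<Rightarrow> 'a set \<Rightarrow> 'a set \<Rightarrow> ('a, 'b::binomial_ring) laby set" where
  "laby_n_rel n X Y =
     {maze_comb P | P. is_maze X Y P \<and> size P > n} \<union> {rel_IV n P | P. is_maze X Y P}"

definition multation_of :: "('a, 'b) passage list \<Rightarrow> nat list \<Rightarrow> 'a multation" where
  "multation_of ps ds = sum_list (map2 (\<lambda>p d. replicate_mset d (src p, tgt p)) ps ds)"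

text \<open>Coefficient of the product of divided powers: prod_{(a,b)} m(a,b)! / prod_p d_p!.\<close>
definition dp_coeff :: "'a multation \<Rightarrow> nat list \<Rightarrow> nat" where
  "dp_coeff mu ds = (\<Prod>ab\<in>set_mset mu. fact (count mu ab)) div (\<Prod>d\<leftarrow>ds. fact d)"

definition ariadne :: "nat \<Rightarrow> ('a, 'b::comm_ring_1) maze \<Rightarrow> 'a multation \<Rightarrow> 'b" where
  "ariadne n P mu =
     (\<Sum>ds\<in>{ds\<in>assignments n (maze_list P). sum_list ds = n \<and> multation_of (maze_list P) ds = mu}.
        (\<Prod>(p, d)\<leftarrow>zip (maze_list P) ds. lbl p ^ d) * of_nat (dp_coeff mu ds))"

definition ariadne_mor :: "nat \<Rightarrow> ('a, 'b::comm_ring_1) laby \<Rightarrow> 'a multation \<Rightarrow> 'b" where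
  "ariadne_mor n F mu = (\<Sum>P\<in>supp F. F P * ariadne n P mu)"

end

theory Submission
  imports Defs "HOL-Combinatorics.Stirling" "HOL-Combinatorics.Permutations" "HOL-Library.FuncSet"
begin

definition ff :: "'b::comm_ring_1 \<Rightarrow> nat \<Rightarrow> 'b" where
  "ff a k = (\<Prod>i<k. a - of_nat i)"

lemma fact_cancel:
  fixes c1 c2 :: "'b::binomial_ring"
  assumes "of_nat (fact k) * c1 = of_nat (fact k) * c2"
  shows "c1 = c2"
proof -
  have "of_nat (fact k) * (c1 - c2) = 0" using assms by (simp add: algebra_simps)
  then show ?thesis using torsion_free[of "fact k" "c1 - c2"] by simp
qed

lemma bchoose_prop:
  fixes a :: "'b::binomial_ring"
  shows "of_nat (fact k) * bchoose a k = ff a k"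
proof -
  obtain c where c: "of_nat (fact k) * c = (\<Prod>i<k. a - of_nat i)"
    using binom_closed by blast
  have "bchoose a k = c" unfolding bchoose_def
    by (rule the_equality) (use c in \<open>auto intro: fact_cancel\<close>, metis c fact_cancel)
  then show ?thesis using c by (simp add: ff_def)
qed

lemma ff_Suc: "ff a (Suc k) = ff a k * (a - of_nat k)"
  by (simp add: ff_def)

lemma stirling_ff:
  fixes a :: "'b::comm_ring_1"
  shows "(\<Sum>d\<le>k. of_nat (Stirling k d) * ff a d) = a ^ k"
proof (induction k)
  case 0 then show ?case by (simp add: ff_def)
next
  case (Suc k)
  have "a ^ Suc k = a * (\<Sum>d\<le>k. of_nat (Stirling k d) * ff a d)" using Suc by simp
  also have "\<dots> = (\<Sum>d\<le>k. of_nat (Stirling k d) * ff a (Suc d)) +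
                   (\<Sum>d\<le>k. of_nat (Stirling k d) * of_nat d * ff a d)"
    by (simp add: sum_distrib_left sum.distrib[symmetric] ff_Suc algebra_simps)
  also have "(\<Sum>d\<le>k. of_nat (Stirling k d) * ff a (Suc d)) =
      (\<Sum>d\<le>Suc k. (if d = 0 then 0 else of_nat (Stirling k (d - 1))) * ff a d)"
    by (subst sum.atMost_Suc_shift) simp
  also have "(\<Sum>d\<le>k. of_nat (Stirling k d) * of_nat d * ff a d) =
      (\<Sum>d\<le>Suc k. of_nat (Stirling k d) * of_nat d * ff a d)"
    by (simp add: sum.atMost_Suc)
  also have "(\<Sum>d\<le>Suc k. (if d = 0 then 0 else of_nat (Stirling k (d - 1))) * ff a d) +
     (\<Sum>d\<le>Suc k. of_nat (Stirling k d) * of_nat d * ff a d) =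
     (\<Sum>d\<le>Suc k. of_nat (Stirling (Suc k) d) * ff a d)"
    unfolding sum.distrib[symmetric]
  proof (rule sum.cong[OF refl])
    fix d assume "d \<in> {..Suc k}"
    show "(if d = 0 then 0 else of_nat (Stirling k (d - 1))) * ff a d +
        of_nat (Stirling k d) * of_nat d * ff a d = of_nat (Stirling (Suc k) d) * ff a d"
      by (cases d) (simp_all add: algebra_simps)
  qed
  finally show ?case by simp
qed

definition Ns :: "nat \<Rightarrow> nat \<Rightarrow> nat" where "Ns k d = fact d * Stirling k d"

lemma bchoose_Ns:
  fixes a :: "'b::binomial_ring"
  shows "(\<Sum>d\<le>k. bchoose a d * of_nat (Ns k d)) = a ^ k"
proof -
  have "(\<Sum>d\<le>k. bchoose a d * of_nat (Ns k d)) = (\<Sum>d\<le>k. of_nat (Stirling k d) * ff a d)"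
    by (rule sum.cong[OF refl]) (simp add: Ns_def bchoose_prop[symmetric] algebra_simps)
  then show ?thesis using stirling_ff by simp
qed

lemma Stirling_rec:
  "Suc d * Stirling k (Suc d) = (\<Sum>j<k. (k choose Suc j) * Stirling (k - Suc j) d)"
proof (induction k arbitrary: d)
  case 0 then show ?case by simp
next
  case (Suc k)
  have split: "(\<Sum>j<Suc k. (Suc k choose Suc j) * Stirling (Suc k - Suc j) d) =
      (\<Sum>j<k. (k choose Suc j) * Stirling (Suc (k - Suc j)) d) +
      (Stirling k d + (\<Sum>j<k. (k choose Suc j) * Stirling (k - Suc j) d))"
  proof -
    have "(\<Sum>j<Suc k. (Suc k choose Suc j) * Stirling (Suc k - Suc j) d) =
        (\<Sum>j<Suc k. (k choose Suc j) * Stirling (k - j) d) + (\<Sum>j<Suc k. (k choose j) * Stirling (k - j) d)"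
      by (simp add: sum.distrib[symmetric] algebra_simps)
    also have "(\<Sum>j<Suc k. (k choose Suc j) * Stirling (k - j) d) =
        (\<Sum>j<k. (k choose Suc j) * Stirling (Suc (k - Suc j)) d)"
      by (simp add: Suc_diff_Suc)
    also have "(\<Sum>j<Suc k. (k choose j) * Stirling (k - j) d) =
        Stirling k d + (\<Sum>j<k. (k choose Suc j) * Stirling (k - Suc j) d)"
      by (subst sum.lessThan_Suc_shift) simp
    finally show ?thesis .
  qed
  show ?case
  proof (cases d)
    case 0
    then show ?thesis using split Suc.IH[of 0] by simp
  next
    case (Suc d')
    have "(\<Sum>j<k. (k choose Suc j) * Stirling (Suc (k - Suc j)) d) =
       d * (\<Sum>j<k. (k choose Suc j) * Stirling (k - Suc j) d) +
       (\<Sum>j<k. (k choose Suc j) * Stirling (k - Suc j) d')"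
      using Suc by (simp add: sum_distrib_left sum.distrib[symmetric] algebra_simps)
    also have "\<dots> = d * (Suc d * Stirling k (Suc d)) + d * Stirling k d"
      using Suc.IH[of d] Suc.IH[of d'] Suc by simp
    finally have A: "(\<Sum>j<k. (k choose Suc j) * Stirling (Suc (k - Suc j)) d) =
       d * (Suc d * Stirling k (Suc d)) + d * Stirling k d" .
    have E: "(\<Sum>j<Suc k. (Suc k choose Suc j) * Stirling (Suc k - Suc j) d) =
       d * (Suc d * Stirling k (Suc d)) + d * Stirling k d + (Stirling k d + Suc d * Stirling k (Suc d))"
      using split[unfolded A Suc.IH[of d, symmetric]] by simp
    show ?thesis by (simp only: E) (simp add: algebra_simps)
  qed
qed

lemma Ns_rec: "Ns k (Suc d) = (\<Sum>j<k. (k choose Suc j) * Ns (k - Suc j) d)"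
proof -
  have "Ns k (Suc d) = fact d * (Suc d * Stirling k (Suc d))" by (simp add: Ns_def algebra_simps)
  also have "\<dots> = (\<Sum>j<k. (k choose Suc j) * Ns (k - Suc j) d)"
    by (simp only: Stirling_rec sum_distrib_left Ns_def) (simp add: algebra_simps)
  finally show ?thesis .
qed

lemma Ns_0 [simp]: "Ns k 0 = (if k = 0 then 1 else 0)"
  by (cases k) (simp_all add: Ns_def)

lemma Ns_less: "k < d \<Longrightarrow> Ns k d = 0"
  by (simp add: Ns_def)

definition pr :: "('a, 'b) passage \<Rightarrow> 'a \<times> 'a" where "pr p = (src p, tgt p)"

fun Sm :: "('a, 'b::comm_ring_1) passage list \<Rightarrow> ('a \<times> 'a) multiset \<Rightarrow> 'b" where
  "Sm [] mu = (if mu = {#} then 1 else 0)"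
| "Sm (p # ps) mu = (\<Sum>k\<in>{1..count mu (pr p)}.
      of_nat (count mu (pr p) choose k) * lbl p ^ k * Sm ps (mu - replicate_mset k (pr p)))"

lemma size_diff_rep: "k \<le> count mu x \<Longrightarrow> size (mu - replicate_mset k x) = size mu - k"
  by (simp add: size_Diff_submset subseteq_mset_def count_replicate_mset)

lemma count_le_size: "count mu x \<le> size mu"
  by (simp add: count_le_size)

lemma Sm_big: "size mu < length ps \<Longrightarrow> Sm ps mu = 0"
proof (induction ps arbitrary: mu)
  case Nil then show ?case by simp
next
  case (Cons p ps)
  have "Sm ps (mu - replicate_mset k (pr p)) = 0" if "k \<in> {1..count mu (pr p)}" for k
    using that Cons.prems count_le_size[of mu "pr p"] by (intro Cons.IH) (auto simp: size_diff_rep)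
  then show ?case by simp
qed

lemma rep_diff_diff: "mu - replicate_mset j x - replicate_mset i x = mu - replicate_mset (i + j) x"
  by (rule multiset_eqI) (simp add: add.commute)

lemma rep_plus: "replicate_mset j x + replicate_mset i x = replicate_mset (i + j) x"
  by (rule multiset_eqI) (simp add: add.commute)

definition unitp :: "('a, 'b) passage \<Rightarrow> ('a, 'b::one) passage" where
  "unitp p = (src p, 1, tgt p)"

lemma pr_unitp [simp]: "pr (unitp p) = pr p" and lbl_unitp [simp]: "lbl (unitp p) = 1"
  by (simp_all add: pr_def unitp_def src_def tgt_def lbl_def)

lemma Sm_rep:
  fixes u :: "('a, 'b::comm_ring_1) passage"
  assumes "lbl u = 1"
  shows "Sm (replicate d u @ rest) mu =
    (\<Sum>k\<le>count mu (pr u). of_nat ((count mu (pr u) choose k) * Ns k d) *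
        Sm rest (mu - replicate_mset k (pr u)))"
proof (induction d arbitrary: mu)
  case 0
  have "(\<Sum>k\<le>count mu (pr u). of_nat ((count mu (pr u) choose k) * Ns k 0) *
        Sm rest (mu - replicate_mset k (pr u))) = (\<Sum>k\<le>count mu (pr u). if k = 0 then Sm rest mu else 0)"
    by (rule sum.cong) auto
  then show ?case by simp
next
  case (Suc d)
  define x where "x = pr u"
  define c where "c = count mu x"
  define F where "F k = Sm rest (mu - replicate_mset k x)" for k
  define G where "G j k = of_nat ((c choose j) * ((c - j) choose (k - j)) * Ns (k - j) d) * F k" for j k
  have "Sm (replicate (Suc d) u @ rest) mu =
     (\<Sum>j\<in>{1..c}. of_nat (c choose j) * Sm (replicate d u @ rest) (mu - replicate_mset j x))"
    by (simp add: assms x_def c_def)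
  also have "\<dots> = (\<Sum>j\<in>{1..c}. \<Sum>i\<le>c - j. of_nat (c choose j) *
       (of_nat (((c - j) choose i) * Ns i d) * F (i + j)))"
    by (simp add: Suc.IH x_def[symmetric] c_def[symmetric] F_def sum_distrib_left
        rep_plus)
  also have "\<dots> = (\<Sum>j\<in>{1..c}. \<Sum>k\<in>{j..c}. G j k)"
  proof (rule sum.cong[OF refl])
    fix j assume j: "j \<in> {1..c}"
    have "(\<Sum>k\<in>{j..c}. G j k) = (\<Sum>i\<in>{..c - j}. G j (i + j))"
      by (rule sum.reindex_bij_witness[of _ "\<lambda>i. i + j" "\<lambda>k. k - j"]) (use j in auto)
    then show "(\<Sum>i\<le>c - j. of_nat (c choose j) * (of_nat (((c - j) choose i) * Ns i d) * F (i + j))) =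
        (\<Sum>k\<in>{j..c}. G j k)" by (simp add: G_def algebra_simps)
  qed
  also have "\<dots> = (\<Sum>j\<in>{1..c}. \<Sum>k\<le>c. if j \<le> k then G j k else 0)"
    by (rule sum.cong[OF refl], rule sum.mono_neutral_cong_left) auto
  also have "\<dots> = (\<Sum>k\<le>c. \<Sum>j\<in>{1..c}. if j \<le> k then G j k else 0)"
    by (rule sum.swap)
  also have "\<dots> = (\<Sum>k\<le>c. of_nat ((c choose k) * Ns k (Suc d)) * F k)"
  proof (rule sum.cong[OF refl])
    fix k assume k: "k \<in> {..c}"
    have "(\<Sum>j\<in>{1..c}. if j \<le> k then G j k else 0) = (\<Sum>j\<in>{1..k}. G j k)"
      by (rule sum.mono_neutral_cong_right) (use k in auto)
    also have "\<dots> = (\<Sum>j<k. G (Suc j) k)"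
      by (rule sum.reindex_bij_witness[of _ "Suc" "\<lambda>j. j - 1"]) auto
    also have "\<dots> = (\<Sum>j<k. of_nat ((c choose k) * ((k choose Suc j) * Ns (k - Suc j) d)) * F k)"
    proof (rule sum.cong[OF refl])
      fix j assume j: "j \<in> {..<k}"
      have "(c choose k) * (k choose Suc j) = (c choose Suc j) * ((c - Suc j) choose (k - Suc j))"
        by (rule choose_mult) (use j k in auto)
      then show "G (Suc j) k = of_nat ((c choose k) * ((k choose Suc j) * Ns (k - Suc j) d)) * F k"
        unfolding G_def by (metis mult.assoc)
    qed
    also have "\<dots> = of_nat ((c choose k) * Ns k (Suc d)) * F k"
      by (simp add: Ns_rec sum_distrib_left sum_distrib_right)
    finally show "(\<Sum>j\<in>{1..c}. if j \<le> k then G j k else 0) = of_nat ((c choose k) * Ns k (Suc d)) * F k" .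
  qed
  finally show ?case by (simp add: x_def c_def F_def)
qed

definition ulist :: "('a, 'b) passage list \<Rightarrow> nat list \<Rightarrow> ('a, 'b::one) passage list" where
  "ulist ps ds = concat (map2 (\<lambda>p d. replicate d (unitp p)) ps ds)"

lemma ulist_Nil [simp]: "ulist [] ds = []" by (simp add: ulist_def)
lemma ulist_Cons [simp]: "ulist (p # ps) (d # ds) = replicate d (unitp p) @ ulist ps ds"
  by (simp add: ulist_def)

lemma unit_maze_ulist: "unit_maze ps ds = mset (ulist ps ds)"
  by (simp add: unit_maze_def ulist_def unitp_def)

lemma finite_assignments: "finite (assignments m ps)"
proof -
  have "assignments m ps \<subseteq> {ds. set ds \<subseteq> {..m} \<and> length ds = length ps}"
    by (auto simp: assignments_def intro: order.trans[OF member_le_sum_list])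
  then show ?thesis by (rule finite_subset) (rule finite_lists_length_eq, simp)
qed

lemma assignments_Nil [simp]: "assignments m [] = {[]}"
  by (auto simp: assignments_def)

lemma assignments_Cons:
  "assignments m (p # ps) = (\<lambda>(d, ds). d # ds) ` (SIGMA d:{1..m}. assignments (m - d) ps)"
proof safe
  fix ds assume "ds \<in> assignments m (p # ps)"
  then obtain d ds' where ds: "ds = d # ds'" by (cases ds) (auto simp: assignments_def)
  with \<open>ds \<in> _\<close> have "(d, ds') \<in> (SIGMA d:{1..m}. assignments (m - d) ps)"
    by (auto simp: assignments_def)
  then show "ds \<in> (\<lambda>(d, ds). d # ds) ` (SIGMA d:{1..m}. assignments (m - d) ps)"
    using ds by force
next
  fix d ds assume "d \<in> {1..m}" "ds \<in> assignments (m - d) ps"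
  then show "d # ds \<in> assignments m (p # ps)" by (auto simp: assignments_def)
qed

lemma sum_assignments_Cons:
  "(\<Sum>ds\<in>assignments m (p # ps). f ds) = (\<Sum>d\<in>{1..m}. \<Sum>ds\<in>assignments (m - d) ps. f (d # ds))"
proof -
  have inj: "inj_on (\<lambda>(d, ds). d # ds) (SIGMA d:{1..m}. assignments (m - d) ps)"
    by (auto simp: inj_on_def)
  have "(\<Sum>ds\<in>assignments m (p # ps). f ds) = (\<Sum>(d, ds)\<in>(SIGMA d:{1..m}. assignments (m - d) ps). f (d # ds))"
    unfolding assignments_Cons by (subst sum.reindex[OF inj]) (simp add: case_prod_unfold)
  also have "\<dots> = (\<Sum>d\<in>{1..m}. \<Sum>ds\<in>assignments (m - d) ps. f (d # ds))"
    by (rule sum.Sigma[symmetric]) (auto simp: finite_assignments)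
  finally show ?thesis .
qed

lemma bchoose_Ns_range:
  fixes a :: "'b::binomial_ring"
  assumes "k \<le> m"
  shows "(\<Sum>d\<in>{1..m}. bchoose a d * of_nat (Ns k d)) = (if k = 0 then 0 else a ^ k)"
proof (cases "k = 0")
  case True then show ?thesis by (simp add: Ns_def)
next
  case False
  have "(\<Sum>d\<in>{1..m}. bchoose a d * of_nat (Ns k d)) = (\<Sum>d\<le>m. bchoose a d * of_nat (Ns k d))"
    by (rule sum.mono_neutral_left) (use False in \<open>auto simp: not_less_eq_eq\<close>)
  also have "\<dots> = (\<Sum>d\<le>k. bchoose a d * of_nat (Ns k d))"
    by (rule sum.mono_neutral_right) (use assms in \<open>auto simp: Ns_less\<close>)
  finally show ?thesis using False bchoose_Ns by simp
qed

lemma Sm_rel: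
  fixes ps :: "('a, 'b::binomial_ring) passage list"
  assumes "size mu \<le> m"
  shows "Sm ps mu = (\<Sum>ds\<in>assignments m ps.
      (\<Prod>(p, d)\<leftarrow>zip ps ds. bchoose (lbl p) d) * Sm (ulist ps ds) mu)"
  using assms
proof (induction ps arbitrary: mu m)
  case Nil then show ?case by simp
next
  case (Cons p ps)
  define x where "x = pr p"
  define c where "c = count mu x"
  define a where "a = lbl p"
  define PR where "PR ds = (\<Prod>(p, d)\<leftarrow>zip ps ds. bchoose (lbl p) d)" for ds
  have cm: "c \<le> m" using Cons.prems count_le_size[of mu x] by (simp add: c_def)
  have "(\<Sum>ds\<in>assignments m (p # ps). (\<Prod>(p, d)\<leftarrow>zip (p # ps) ds. bchoose (lbl p) d) *
         Sm (ulist (p # ps) ds) mu)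
     = (\<Sum>d\<in>{1..m}. \<Sum>ds\<in>assignments (m - d) ps. bchoose a d * PR ds *
         Sm (replicate d (unitp p) @ ulist ps ds) mu)"
    by (simp add: sum_assignments_Cons PR_def a_def mult.assoc)
  also have "\<dots> = (\<Sum>d\<in>{1..m}. \<Sum>ds\<in>assignments (m - d) ps. bchoose a d * PR ds *
         (\<Sum>k\<le>c. of_nat ((c choose k) * Ns k d) * Sm (ulist ps ds) (mu - replicate_mset k x)))"
    by (simp add: Sm_rep x_def c_def)
  also have "\<dots> = (\<Sum>d\<in>{1..m}. \<Sum>k\<le>c. bchoose a d * of_nat ((c choose k) * Ns k d) *
         (\<Sum>ds\<in>assignments (m - d) ps. PR ds * Sm (ulist ps ds) (mu - replicate_mset k x)))"
    by (simp add: sum_distrib_left sum_distrib_right mult_ac sum.swap[of _ "{..c}"])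
  also have "\<dots> = (\<Sum>d\<in>{1..m}. \<Sum>k\<le>c. bchoose a d * of_nat ((c choose k) * Ns k d) *
         Sm ps (mu - replicate_mset k x))"
  proof (intro sum.cong refl)
    fix d k assume d: "d \<in> {1..m}" and k: "k \<in> {..c}"
    show "bchoose a d * of_nat ((c choose k) * Ns k d) *
         (\<Sum>ds\<in>assignments (m - d) ps. PR ds * Sm (ulist ps ds) (mu - replicate_mset k x)) =
         bchoose a d * of_nat ((c choose k) * Ns k d) * Sm ps (mu - replicate_mset k x)"
    proof (cases "d \<le> k")
      case True
      have "size (mu - replicate_mset k x) \<le> m - d"
        using k True Cons.prems by (simp add: size_diff_rep c_def)
      from Cons.IH[OF this] show ?thesis by (simp add: PR_def)
    next
      case False then show ?thesis by (simp add: Ns_less)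
    qed
  qed
  also have "\<dots> = (\<Sum>k\<le>c. of_nat (c choose k) * Sm ps (mu - replicate_mset k x) *
         (\<Sum>d\<in>{1..m}. bchoose a d * of_nat (Ns k d)))"
    by (subst sum.swap) (simp add: sum_distrib_left sum_distrib_right mult_ac)
  also have "\<dots> = (\<Sum>k\<le>c. of_nat (c choose k) * Sm ps (mu - replicate_mset k x) *
         (if k = 0 then 0 else a ^ k))"
  proof (rule sum.cong[OF refl])
    fix k assume "k \<in> {..c}"
    then have "k \<le> m" using cm by simp
    then show "of_nat (c choose k) * Sm ps (mu - replicate_mset k x) *
         (\<Sum>d\<in>{1..m}. bchoose a d * of_nat (Ns k d)) = of_nat (c choose k) * Sm ps (mu - replicate_mset k x) *
         (if k = 0 then 0 else a ^ k)" by (simp only: bchoose_Ns_range)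
  qed
  also have "\<dots> = (\<Sum>k\<in>{1..c}. of_nat (c choose k) * a ^ k * Sm ps (mu - replicate_mset k x))"
    by (rule sum.mono_neutral_cong_right) auto
  finally show ?case by (simp add: x_def c_def a_def)
qed

lemma multation_of_Nil [simp]: "multation_of [] ds = {#}"
  by (simp add: multation_of_def)
lemma multation_of_Cons [simp]:
  "multation_of (p # ps) (d # ds) = replicate_mset d (pr p) + multation_of ps ds"
  by (simp add: multation_of_def pr_def)

lemma size_multation_of: "length ds = length ps \<Longrightarrow> size (multation_of ps ds) = sum_list ds"
  by (induction ps arbitrary: ds) (auto simp: length_Suc_conv)

definition Pf :: "'a multiset \<Rightarrow> nat" where
  "Pf mu = (\<Prod>ab\<in>set_mset mu. fact (count mu ab))"

lemma Pf_superset: "finite S \<Longrightarrow> set_mset mu \<subseteq> S \<Longrightarrow> Pf mu = (\<Prod>ab\<in>S. fact (count mu ab))"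
  unfolding Pf_def by (rule prod.mono_neutral_left) (auto simp: not_in_iff)

lemma Pf_rep: "Pf (replicate_mset d x + mu) * fact (count mu x) = fact (count mu x + d) * Pf mu"
proof -
  define S where "S = insert x (set_mset mu)"
  have fS: "finite S" by (simp add: S_def)
  have xS: "x \<in> S" by (simp add: S_def)
  have "Pf (replicate_mset d x + mu) = (\<Prod>ab\<in>S. fact (count (replicate_mset d x + mu) ab))"
    by (rule Pf_superset[OF fS]) (auto simp: S_def)
  also have "\<dots> = fact (count mu x + d) * (\<Prod>ab\<in>S - {x}. fact (count (replicate_mset d x + mu) ab))"
    by (simp add: prod.remove[OF fS xS] add.commute)
  also have "(\<Prod>ab\<in>S - {x}. fact (count (replicate_mset d x + mu) ab)) = (\<Prod>ab\<in>S - {x}. fact (count mu ab))"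
    by (rule prod.cong) auto
  finally have A: "Pf (replicate_mset d x + mu) = fact (count mu x + d) * (\<Prod>ab\<in>S - {x}. fact (count mu ab))" .
  have "Pf mu = (\<Prod>ab\<in>S. fact (count mu ab))"
    by (rule Pf_superset[OF fS]) (auto simp: S_def)
  also have "\<dots> = fact (count mu x) * (\<Prod>ab\<in>S - {x}. fact (count mu ab))"
    by (simp add: prod.remove[OF fS xS])
  finally have B: "Pf mu = fact (count mu x) * (\<Prod>ab\<in>S - {x}. fact (count mu ab))" .
  show ?thesis by (simp add: A B)
qed

lemma prod_fact_pos: "(\<Prod>d\<leftarrow>ds. fact d) > (0::nat)"
  by (induction ds) auto

lemma dp_coeff_Pf: "dp_coeff mu ds = Pf mu div (\<Prod>d\<leftarrow>ds. fact d)"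
  by (simp add: dp_coeff_def Pf_def)

lemma dp_main:
  "length ds = length ps \<Longrightarrow>
   Pf (multation_of ps ds) = (\<Prod>d\<leftarrow>ds. fact d) * dp_coeff (multation_of ps ds) ds"
proof (induction ps arbitrary: ds)
  case Nil then show ?case by (simp add: Pf_def dp_coeff_def)
next
  case (Cons p ps)
  then obtain d ds' where ds: "ds = d # ds'" and len: "length ds' = length ps"
    by (cases ds) auto
  define mu' where "mu' = multation_of ps ds'"
  define c where "c = count mu' (pr p)"
  define Q where "Q = dp_coeff mu' ds'"
  have IH: "Pf mu' = (\<Prod>d\<leftarrow>ds'. fact d) * Q" using Cons.IH[OF len] by (simp add: mu'_def Q_def)
  have "Pf (replicate_mset d (pr p) + mu') * fact c = fact (c + d) * Pf mu'"
    using Pf_rep by (simp add: c_def)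
  also have "fact (c + d) = ((c + d) choose d) * fact c * fact d"
    using binomial_fact_lemma[of d "c + d"] by (simp add: algebra_simps)
  finally have "Pf (replicate_mset d (pr p) + mu') = ((c + d) choose d) * fact d * Pf mu'"
    by (simp add: algebra_simps)
  then have E: "Pf (replicate_mset d (pr p) + mu') = (fact d * (\<Prod>d\<leftarrow>ds'. fact d)) * (((c + d) choose d) * Q)"
    using IH by (simp add: algebra_simps)
  have pos: "fact d * (\<Prod>d\<leftarrow>ds'. fact d) > (0::nat)"
    using prod_fact_pos[of ds'] by simp
  have "dp_coeff (replicate_mset d (pr p) + mu') (d # ds') = ((c + d) choose d) * Q"
    unfolding dp_coeff_Pf E using pos by simp
  then show ?case using E by (simp add: ds mu'_def[symmetric])
qed

lemma dp_Cons:
  fixes p :: "('a, 'b) passage" and ps :: "('a, 'b) passage list"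
  assumes "length ds = length ps"
  shows "dp_coeff (replicate_mset d (pr p) + multation_of ps ds) (d # ds) =
     ((count (multation_of ps ds) (pr p) + d) choose d) * dp_coeff (multation_of ps ds) ds"
proof -
  define mu' where "mu' = multation_of ps ds"
  define c where "c = count mu' (pr p)"
  have M1: "Pf mu' = (\<Prod>d\<leftarrow>ds. fact d) * dp_coeff mu' ds" using dp_main[OF assms] by (simp add: mu'_def)
  have M2: "Pf (replicate_mset d (pr p) + mu') = (fact d * (\<Prod>d\<leftarrow>ds. fact d)) * dp_coeff (replicate_mset d (pr p) + mu') (d # ds)"
    using dp_main[of "d # ds" "p # ps"] assms by (simp add: mu'_def)
  have "Pf (replicate_mset d (pr p) + mu') * fact c = fact (c + d) * Pf mu'"
    using Pf_rep by (simp add: c_def)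
  also have "fact (c + d) = ((c + d) choose d) * fact c * fact d"
    using binomial_fact_lemma[of d "c + d"] by (simp add: algebra_simps)
  finally have "Pf (replicate_mset d (pr p) + mu') = ((c + d) choose d) * fact d * Pf mu'"
    by (simp add: algebra_simps)
  with M1 M2 have "(fact d * (\<Prod>d\<leftarrow>ds. fact d)) * dp_coeff (replicate_mset d (pr p) + mu') (d # ds) =
     (fact d * (\<Prod>d\<leftarrow>ds. fact d)) * (((c + d) choose d) * dp_coeff mu' ds)"
    by (simp add: algebra_simps)
  moreover have "fact d * (\<Prod>d\<leftarrow>ds. fact d) > (0::nat)" using prod_fact_pos[of ds] by simp
  ultimately show ?thesis by (simp add: mu'_def[symmetric] c_def[symmetric])
qed

definition Dset :: "('a, 'b) passage list \<Rightarrow> ('a \<times> 'a) multiset \<Rightarrow> nat list set" where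
  "Dset ps mu = {ds. length ds = length ps \<and> (\<forall>d\<in>set ds. 1 \<le> d) \<and> multation_of ps ds = mu}"

lemma Dset_sub: "Dset ps mu \<subseteq> assignments (size mu) ps"
  by (auto simp: Dset_def assignments_def size_multation_of)

lemma finite_Dset: "finite (Dset ps mu)"
  using finite_subset[OF Dset_sub finite_assignments] .

lemma Dset_Nil: "Dset [] mu = (if mu = {#} then {[]} else {})"
  by (auto simp: Dset_def)

lemma Dset_Cons:
  "Dset (p # ps) mu = (\<lambda>(d, ds). d # ds) `
     (SIGMA d:{1..count mu (pr p)}. Dset ps (mu - replicate_mset d (pr p)))"
proof safe
  fix ds assume "ds \<in> Dset (p # ps) mu"
  then obtain d ds' where ds: "ds = d # ds'" by (cases ds) (auto simp: Dset_def)
  with \<open>ds \<in> _\<close> have A: "length ds' = length ps" "1 \<le> d" "\<forall>d\<in>set ds'. 1 \<le> d"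
    "replicate_mset d (pr p) + multation_of ps ds' = mu"
    by (auto simp: Dset_def)
  then have "d \<le> count mu (pr p)" by auto
  moreover have "multation_of ps ds' = mu - replicate_mset d (pr p)" using A(4) by auto
  ultimately have "(d, ds') \<in> (SIGMA d:{1..count mu (pr p)}. Dset ps (mu - replicate_mset d (pr p)))"
    using A by (auto simp: Dset_def)
  then show "ds \<in> (\<lambda>(d, ds). d # ds) ` (SIGMA d:{1..count mu (pr p)}. Dset ps (mu - replicate_mset d (pr p)))"
    using ds by force
next
  fix d ds assume d: "d \<in> {1..count mu (pr p)}" and ds: "ds \<in> Dset ps (mu - replicate_mset d (pr p))"
  have "replicate_mset d (pr p) \<subseteq># mu" using d by (simp add: count_le_replicate_mset_subset_eq[symmetric])
  then have "replicate_mset d (pr p) + (mu - replicate_mset d (pr p)) = mu"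
    by (simp add: subset_mset.add_diff_inverse)
  then show "d # ds \<in> Dset (p # ps) mu" using d ds by (auto simp: Dset_def)
qed

lemma AD:
  fixes ps :: "('a, 'b::comm_ring_1) passage list"
  shows "(\<Sum>ds\<in>Dset ps mu. (\<Prod>(p, d)\<leftarrow>zip ps ds. lbl p ^ d) * of_nat (dp_coeff mu ds)) = Sm ps mu"
proof (induction ps arbitrary: mu)
  case Nil then show ?case by (simp add: Dset_Nil dp_coeff_def Pf_def)
next
  case (Cons p ps)
  define x where "x = pr p"
  define c where "c = count mu x"
  have inj: "inj_on (\<lambda>(d, ds). d # ds) (SIGMA d:{1..c}. Dset ps (mu - replicate_mset d x))"
    by (auto simp: inj_on_def)
  have "(\<Sum>ds\<in>Dset (p # ps) mu. (\<Prod>(p, d)\<leftarrow>zip (p # ps) ds. lbl p ^ d) * of_nat (dp_coeff mu ds)) =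
     (\<Sum>(d, ds)\<in>(SIGMA d:{1..c}. Dset ps (mu - replicate_mset d x)).
        lbl p ^ d * (\<Prod>(p, d)\<leftarrow>zip ps ds. lbl p ^ d) * of_nat (dp_coeff mu (d # ds)))"
    unfolding Dset_Cons x_def[symmetric] c_def[symmetric]
    by (subst sum.reindex[OF inj]) (simp add: case_prod_unfold mult.assoc)
  also have "\<dots> = (\<Sum>d\<in>{1..c}. \<Sum>ds\<in>Dset ps (mu - replicate_mset d x).
        lbl p ^ d * (\<Prod>(p, d)\<leftarrow>zip ps ds. lbl p ^ d) * of_nat (dp_coeff mu (d # ds)))"
    by (rule sum.Sigma[symmetric]) (auto simp: finite_Dset)
  also have "\<dots> = (\<Sum>d\<in>{1..c}. of_nat (c choose d) * lbl p ^ d *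
      (\<Sum>ds\<in>Dset ps (mu - replicate_mset d x). (\<Prod>(p, d)\<leftarrow>zip ps ds. lbl p ^ d) *
          of_nat (dp_coeff (mu - replicate_mset d x) ds)))"
  proof (rule sum.cong[OF refl])
    fix d assume d: "d \<in> {1..c}"
    have sub: "replicate_mset d x \<subseteq># mu" using d
      by (simp add: c_def count_le_replicate_mset_subset_eq[symmetric])
    have "(\<Sum>ds\<in>Dset ps (mu - replicate_mset d x).
        lbl p ^ d * (\<Prod>(p, d)\<leftarrow>zip ps ds. lbl p ^ d) * of_nat (dp_coeff mu (d # ds))) =
      (\<Sum>ds\<in>Dset ps (mu - replicate_mset d x). of_nat (c choose d) * lbl p ^ d *
          ((\<Prod>(p, d)\<leftarrow>zip ps ds. lbl p ^ d) * of_nat (dp_coeff (mu - replicate_mset d x) ds)))"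
    proof (rule sum.cong[OF refl])
      fix ds assume ds: "ds \<in> Dset ps (mu - replicate_mset d x)"
      then have len: "length ds = length ps" and mo: "multation_of ps ds = mu - replicate_mset d x"
        by (auto simp: Dset_def)
      have mu: "mu = replicate_mset d (pr p) + multation_of ps ds"
        using sub mo by (simp add: x_def subset_mset.add_diff_inverse)
      have "count (multation_of ps ds) (pr p) = c - d"
        unfolding mo by (simp add: c_def x_def)
      then have cnt: "count (multation_of ps ds) (pr p) + d = c"
        using d by simp
      have "dp_coeff mu (d # ds) = (c choose d) * dp_coeff (mu - replicate_mset d x) ds"
        using dp_Cons[OF len, of d p, unfolded cnt, folded mu, unfolded mo] .
      then show "lbl p ^ d * (\<Prod>(p, d)\<leftarrow>zip ps ds. lbl p ^ d) * of_nat (dp_coeff mu (d # ds)) =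
          of_nat (c choose d) * lbl p ^ d *
          ((\<Prod>(p, d)\<leftarrow>zip ps ds. lbl p ^ d) * of_nat (dp_coeff (mu - replicate_mset d x) ds))"
        by (simp add: algebra_simps)
    qed
    then show "(\<Sum>ds\<in>Dset ps (mu - replicate_mset d x).
        lbl p ^ d * (\<Prod>(p, d)\<leftarrow>zip ps ds. lbl p ^ d) * of_nat (dp_coeff mu (d # ds))) =
      of_nat (c choose d) * lbl p ^ d *
      (\<Sum>ds\<in>Dset ps (mu - replicate_mset d x). (\<Prod>(p, d)\<leftarrow>zip ps ds. lbl p ^ d) *
          of_nat (dp_coeff (mu - replicate_mset d x) ds))"
      by (simp add: sum_distrib_left)
  qed
  also have "\<dots> = Sm (p # ps) mu" by (simp add: Cons.IH x_def c_def)
  finally show ?case .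
qed

lemma ariadne_Sm:
  "ariadne n P mu = (if size mu = n then Sm (maze_list P) mu else 0)"
proof (cases "size mu = n")
  case True
  have "{ds \<in> assignments n (maze_list P). sum_list ds = n \<and> multation_of (maze_list P) ds = mu} =
        Dset (maze_list P) mu"
    using True by (auto simp: Dset_def assignments_def size_multation_of)
  then show ?thesis using True unfolding ariadne_def by (simp add: AD)
next
  case False
  have "{ds \<in> assignments n (maze_list P). sum_list ds = n \<and> multation_of (maze_list P) ds = mu} = {}"
    using False by (auto simp: assignments_def size_multation_of)
  then have "ariadne n P mu = 0" unfolding ariadne_def by (simp only: sum.empty)
  then show ?thesis using False by simp
qed

definition Gs :: "'i set \<Rightarrow> ('i \<Rightarrow> ('a, 'b) passage) \<Rightarrow> 't set \<Rightarrow> ('t \<Rightarrow> 'a \<times> 'a) \<Rightarrow> ('t \<Rightarrow> 'i) set" where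
  "Gs I \<pi> T \<tau> = {g \<in> T \<rightarrow>\<^sub>E I. g ` T = I \<and> (\<forall>t\<in>T. pr (\<pi> (g t)) = \<tau> t)}"

definition Sf :: "'i set \<Rightarrow> ('i \<Rightarrow> ('a, 'b::comm_ring_1) passage) \<Rightarrow> 't set \<Rightarrow> ('t \<Rightarrow> 'a \<times> 'a) \<Rightarrow> 'b" where
  "Sf I \<pi> T \<tau> = (\<Sum>g\<in>Gs I \<pi> T \<tau>. \<Prod>t\<in>T. lbl (\<pi> (g t)))"

lemma finite_Gs: "finite I \<Longrightarrow> finite T \<Longrightarrow> finite (Gs I \<pi> T \<tau>)"
  unfolding Gs_def by (rule finite_subset[OF _ finite_PiE[of T "\<lambda>_. I"]]) auto

lemma Sf_bij:
  assumes bij: "bij_betw \<beta> J I"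
  shows "Sf J (\<pi> \<circ> \<beta>) T \<tau> = Sf I \<pi> T \<tau>"
  unfolding Sf_def
proof (rule sum.reindex_bij_witness[of _ "\<lambda>g. restrict (inv_into J \<beta> \<circ> g) T" "\<lambda>g. restrict (\<beta> \<circ> g) T"])
  have inj: "inj_on \<beta> J" and im: "\<beta> ` J = I" using bij by (auto simp: bij_betw_def)
  fix g assume g: "g \<in> Gs J (\<pi> \<circ> \<beta>) T \<tau>"
  then have gT: "\<And>t. t \<in> T \<Longrightarrow> g t \<in> J" and gE: "\<And>t. t \<notin> T \<Longrightarrow> g t = undefined"
    and gim: "g ` T = J" and gc: "\<And>t. t \<in> T \<Longrightarrow> pr (\<pi> (\<beta> (g t))) = \<tau> t"
    by (auto simp: Gs_def PiE_iff extensional_def)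
  show "restrict (inv_into J \<beta> \<circ> restrict (\<beta> \<circ> g) T) T = g"
    by (rule ext) (auto simp: gE gT inv_into_f_f[OF inj])
  show "restrict (\<beta> \<circ> g) T \<in> Gs I \<pi> T \<tau>"
    unfolding Gs_def using gT gc gim im by (auto simp: PiE_iff image_comp[symmetric])
  show "(\<Prod>t\<in>T. lbl (\<pi> (restrict (\<beta> \<circ> g) T t))) = (\<Prod>t\<in>T. lbl ((\<pi> \<circ> \<beta>) (g t)))"
    by (rule prod.cong) auto
next
  have inj: "inj_on \<beta> J" and im: "\<beta> ` J = I" using bij by (auto simp: bij_betw_def)
  fix g assume g: "g \<in> Gs I \<pi> T \<tau>"
  then have gT: "\<And>t. t \<in> T \<Longrightarrow> g t \<in> I" and gE: "\<And>t. t \<notin> T \<Longrightarrow> g t = undefined"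
    and gim: "g ` T = I" and gc: "\<And>t. t \<in> T \<Longrightarrow> pr (\<pi> (g t)) = \<tau> t"
    by (auto simp: Gs_def PiE_iff extensional_def)
  have fi: "\<And>t. t \<in> T \<Longrightarrow> \<beta> (inv_into J \<beta> (g t)) = g t"
    using gT im by (auto intro: f_inv_into_f)
  show "restrict (\<beta> \<circ> restrict (inv_into J \<beta> \<circ> g) T) T = g"
    by (rule ext) (auto simp: gE fi)
  have "inv_into J \<beta> ` I = J" using bij by (simp add: bij_betw_inv_into bij_betw_imp_surj_on)
  then show "restrict (inv_into J \<beta> \<circ> g) T \<in> Gs J (\<pi> \<circ> \<beta>) T \<tau>"
    unfolding Gs_def using gT gc gim im fi
    by (auto simp: PiE_iff image_comp[symmetric] intro: inv_into_into)
qed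

lemma Sf_insert:
  fixes \<pi> :: "'i \<Rightarrow> ('a, 'b::comm_ring_1) passage"
  assumes fI: "finite I" and fT: "finite T" and i: "i \<notin> I"
  shows "Sf (insert i I) \<pi> T \<tau> =
    (\<Sum>K\<in>{K. K \<subseteq> T \<and> K \<noteq> {} \<and> (\<forall>t\<in>K. \<tau> t = pr (\<pi> i))}. lbl (\<pi> i) ^ card K * Sf I \<pi> (T - K) \<tau>)"
proof -
  define Ks where "Ks = {K. K \<subseteq> T \<and> K \<noteq> {} \<and> (\<forall>t\<in>K. \<tau> t = pr (\<pi> i))}"
  have fKs: "finite Ks" unfolding Ks_def by (rule finite_subset[of _ "Pow T"]) (use fT in auto)
  have "(\<Sum>K\<in>Ks. lbl (\<pi> i) ^ card K * Sf I \<pi> (T - K) \<tau>) =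
        (\<Sum>K\<in>Ks. \<Sum>g\<in>Gs I \<pi> (T - K) \<tau>. lbl (\<pi> i) ^ card K * (\<Prod>t\<in>T - K. lbl (\<pi> (g t))))"
    by (simp add: Sf_def sum_distrib_left)
  also have "\<dots> = (\<Sum>(K, g)\<in>(SIGMA K:Ks. Gs I \<pi> (T - K) \<tau>). lbl (\<pi> i) ^ card K * (\<Prod>t\<in>T - K. lbl (\<pi> (g t))))"
    by (rule sum.Sigma) (use fKs fI fT in \<open>auto intro: finite_Gs\<close>)
  also have "\<dots> = Sf (insert i I) \<pi> T \<tau>"
    unfolding Sf_def
  proof (rule sum.reindex_bij_witness[of _ "\<lambda>f. ({t\<in>T. f t = i}, restrict f (T - {t\<in>T. f t = i}))"
      "\<lambda>(K, g). (\<lambda>t. if t \<in> T then (if t \<in> K then i else g t) else undefined)"])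
    fix Kg assume "Kg \<in> (SIGMA K:Ks. Gs I \<pi> (T - K) \<tau>)"
    then obtain K g where Kg: "Kg = (K, g)" and K: "K \<in> Ks" and g: "g \<in> Gs I \<pi> (T - K) \<tau>" by auto
    from K have KT: "K \<subseteq> T" and Kne: "K \<noteq> {}" and Kc: "\<And>t. t \<in> K \<Longrightarrow> \<tau> t = pr (\<pi> i)"
      by (auto simp: Ks_def)
    from g have gT: "\<And>t. t \<in> T - K \<Longrightarrow> g t \<in> I" and gE: "\<And>t. t \<notin> T - K \<Longrightarrow> g t = undefined"
      and gim: "g ` (T - K) = I" and gc: "\<And>t. t \<in> T - K \<Longrightarrow> pr (\<pi> (g t)) = \<tau> t"
      by (auto simp: Gs_def PiE_iff extensional_def)
    define f where "f = (\<lambda>t. if t \<in> T then (if t \<in> K then i else g t) else undefined)"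
    have Kf: "{t\<in>T. f t = i} = K" using KT gT i by (auto simp: f_def) 
    show "({t\<in>T. (case Kg of (K, g) \<Rightarrow> \<lambda>t. if t \<in> T then if t \<in> K then i else g t else undefined) t = i},
         restrict (case Kg of (K, g) \<Rightarrow> \<lambda>t. if t \<in> T then if t \<in> K then i else g t else undefined)
           (T - {t\<in>T. (case Kg of (K, g) \<Rightarrow> \<lambda>t. if t \<in> T then if t \<in> K then i else g t else undefined) t = i})) = Kg"
      unfolding Kg prod.case f_def[symmetric] Kf
      by (auto simp: Kg f_def gE intro!: ext)
    have "f ` T = insert i I"
    proof
      show "f ` T \<subseteq> insert i I" using gT by (auto simp: f_def)
      show "insert i I \<subseteq> f ` T"
      proof
        fix j assume "j \<in> insert i I"
        then show "j \<in> f ` T"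
        proof
          assume "j = i"
          then obtain t where "t \<in> K" using Kne by auto
          then show ?thesis using KT \<open>j = i\<close> by (auto simp: f_def intro!: image_eqI[of _ _ t])
        next
          assume "j \<in> I"
          then obtain t where "t \<in> T - K" "g t = j" using gim by auto
          then show ?thesis by (auto simp: f_def intro!: image_eqI[of _ _ t])
        qed
      qed
    qed
    then show "(case Kg of (K, g) \<Rightarrow> \<lambda>t. if t \<in> T then if t \<in> K then i else g t else undefined)
        \<in> Gs (insert i I) \<pi> T \<tau>"
      unfolding Kg prod.case f_def[symmetric] Gs_def
      using gT gc Kc by (auto simp: f_def PiE_iff extensional_def)
    have "(\<Prod>t\<in>T. lbl (\<pi> (f t))) = (\<Prod>t\<in>K. lbl (\<pi> (f t))) * (\<Prod>t\<in>T - K. lbl (\<pi> (f t)))"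
      using prod.subset_diff[OF KT fT] by (simp add: mult.commute)
    also have "\<dots> = lbl (\<pi> i) ^ card K * (\<Prod>t\<in>T - K. lbl (\<pi> (g t)))"
    proof -
      have "(\<Prod>t\<in>K. lbl (\<pi> (f t))) = (\<Prod>t\<in>K. lbl (\<pi> i))"
        by (rule prod.cong) (use KT in \<open>auto simp: f_def\<close>)
      moreover have "(\<Prod>t\<in>T - K. lbl (\<pi> (f t))) = (\<Prod>t\<in>T - K. lbl (\<pi> (g t)))"
        by (rule prod.cong) (auto simp: f_def)
      ultimately show ?thesis by simp
    qed
    finally show "(\<Prod>t\<in>T. lbl (\<pi> ((case Kg of (K, g) \<Rightarrow> \<lambda>t. if t \<in> T then if t \<in> K then i else g t else undefined) t))) =
        (case Kg of (K, g) \<Rightarrow> lbl (\<pi> i) ^ card K * (\<Prod>t\<in>T - K. lbl (\<pi> (g t))))"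
      unfolding Kg prod.case f_def[symmetric] by simp
  next
    fix f assume f: "f \<in> Gs (insert i I) \<pi> T \<tau>"
    then have fT': "\<And>t. t \<in> T \<Longrightarrow> f t \<in> insert i I" and fE: "\<And>t. t \<notin> T \<Longrightarrow> f t = undefined"
      and fim: "f ` T = insert i I" and fc: "\<And>t. t \<in> T \<Longrightarrow> pr (\<pi> (f t)) = \<tau> t"
      by (auto simp: Gs_def PiE_iff extensional_def)
    define K where "K = {t\<in>T. f t = i}"
    show "(case ({t\<in>T. f t = i}, restrict f (T - {t\<in>T. f t = i})) of
        (K, g) \<Rightarrow> \<lambda>t. if t \<in> T then if t \<in> K then i else g t else undefined) = f"
      by (auto simp: fE intro!: ext)
    have "K \<in> Ks" unfolding Ks_def K_def using fc fim by (auto, metis image_iff insertI1)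
    moreover have "restrict f (T - K) \<in> Gs I \<pi> (T - K) \<tau>"
    proof -
      have "restrict f (T - K) ` (T - K) = I"
      proof
        show "restrict f (T - K) ` (T - K) \<subseteq> I" using fT' by (auto simp: K_def)
        show "I \<subseteq> restrict f (T - K) ` (T - K)"
        proof
          fix j assume j: "j \<in> I"
          then obtain t where "t \<in> T" "f t = j" using fim by (metis image_iff insertCI)
          then show "j \<in> restrict f (T - K) ` (T - K)" using i j by (auto simp: K_def intro!: image_eqI[of _ _ t])
        qed
      qed
      then show ?thesis unfolding Gs_def using fT' fc by (auto simp: K_def PiE_iff)
    qed
    ultimately show "({t\<in>T. f t = i}, restrict f (T - {t\<in>T. f t = i})) \<in> (SIGMA K:Ks. Gs I \<pi> (T - K) \<tau>)"
      by (simp add: K_def)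
  qed
  finally show ?thesis unfolding Ks_def by simp
qed

lemma sum_subsets_card:
  assumes fA: "finite A"
  shows "(\<Sum>K\<in>{K. K \<subseteq> A \<and> K \<noteq> {}}. F (card K)) = (\<Sum>k\<in>{1..card A}. of_nat (card A choose k) * F k)"
proof -
  have fS: "finite {K. K \<subseteq> A \<and> K \<noteq> {}}" by (rule finite_subset[of _ "Pow A"]) (use fA in auto)
  have sub: "card ` {K. K \<subseteq> A \<and> K \<noteq> {}} \<subseteq> {1..card A}"
    using fA by (auto simp: card_mono Suc_le_eq card_gt_0_iff dest: finite_subset)
  have "(\<Sum>K\<in>{K. K \<subseteq> A \<and> K \<noteq> {}}. F (card K)) =
        (\<Sum>k\<in>{1..card A}. \<Sum>K\<in>{K. K \<in> {K. K \<subseteq> A \<and> K \<noteq> {}} \<and> card K = k}. F (card K))"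
    by (rule sum.group[symmetric, OF fS _ sub]) simp
  also have "\<dots> = (\<Sum>k\<in>{1..card A}. of_nat (card A choose k) * F k)"
  proof (rule sum.cong[OF refl])
    fix k assume k: "k \<in> {1..card A}"
    have eq: "{K. K \<in> {K. K \<subseteq> A \<and> K \<noteq> {}} \<and> card K = k} = {K. K \<subseteq> A \<and> card K = k}"
      using k by auto
    show "(\<Sum>K\<in>{K. K \<in> {K. K \<subseteq> A \<and> K \<noteq> {}} \<and> card K = k}. F (card K)) = of_nat (card A choose k) * F k"
      unfolding eq using n_subsets[OF fA, of k] by (simp add: mult_of_nat_commute)
  qed
  finally show ?thesis .
qed

lemma count_image_mset_set:
  assumes "finite T"
  shows "count (image_mset \<tau> (mset_set T)) x = card {t\<in>T. \<tau> t = x}"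
proof -
  have "count (image_mset \<tau> (mset_set T)) x = (\<Sum>y\<in>\<tau> -` {x} \<inter> T. 1)"
    using assms by (simp add: count_image_mset)
  also have "\<tau> -` {x} \<inter> T = {t\<in>T. \<tau> t = x}" by auto
  finally show ?thesis by simp
qed

lemma image_mset_set_diff:
  assumes fT: "finite T" and KT: "K \<subseteq> T" and Kc: "\<And>t. t \<in> K \<Longrightarrow> \<tau> t = x"
  shows "image_mset \<tau> (mset_set (T - K)) = image_mset \<tau> (mset_set T) - replicate_mset (card K) x"
proof -
  have fK: "finite K" using finite_subset[OF KT fT] .
  have "mset_set K \<subseteq># mset_set T" using KT fT by (rule subset_imp_msubset_mset_set)
  then have "image_mset \<tau> (mset_set (T - K)) = image_mset \<tau> (mset_set T) - image_mset \<tau> (mset_set K)"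
    by (simp add: mset_set_Diff[OF fT KT] image_mset_Diff)
  also have "image_mset \<tau> (mset_set K) = image_mset (\<lambda>_. x) (mset_set K)"
    by (rule image_mset_cong) (use Kc fK in auto)
  also have "\<dots> = replicate_mset (card K) x" by (simp add: image_mset_const_eq)
  finally show ?thesis .
qed

lemma Sf_Nil: "finite T \<Longrightarrow> Sf {} \<pi> T \<tau> = (if T = {} then 1 else 0)"
proof -
  assume fT: "finite T"
  have "Gs {} \<pi> T \<tau> = (if T = {} then {\<lambda>_. undefined} else {})"
    by (auto simp: Gs_def PiE_iff extensional_def)
  then show ?thesis by (simp add: Sf_def)
qed

lemma Sf_Sm:
  fixes ps :: "('a, 'b::comm_ring_1) passage list"
  assumes "finite T"
  shows "Sf {..<length ps} (\<lambda>k. ps ! k) T \<tau> = Sm ps (image_mset \<tau> (mset_set T))"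
  using assms
proof (induction ps arbitrary: T)
  case Nil
  then show ?case by (simp add: Sf_Nil mset_set_empty_iff)
next
  case (Cons p ps)
  define x where "x = pr p"
  define Tx where "Tx = {t\<in>T. \<tau> t = x}"
  define mu where "mu = image_mset \<tau> (mset_set T)"
  have fTx: "finite Tx" using Cons.prems by (simp add: Tx_def)
  have bij: "bij_betw Suc {..<length ps} (Suc ` {..<length ps})" by (simp add: bij_betw_def)
  have "Sf {..<length (p # ps)} (\<lambda>k. (p # ps) ! k) T \<tau> = Sf (insert 0 (Suc ` {..<length ps})) (\<lambda>k. (p # ps) ! k) T \<tau>"
    by (simp add: lessThan_Suc_eq_insert_0)
  also have "\<dots> = (\<Sum>K\<in>{K. K \<subseteq> T \<and> K \<noteq> {} \<and> (\<forall>t\<in>K. \<tau> t = x)}.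
       lbl p ^ card K * Sf (Suc ` {..<length ps}) (\<lambda>k. (p # ps) ! k) (T - K) \<tau>)"
    by (subst Sf_insert) (use Cons.prems in \<open>auto simp: x_def\<close>)
  also have "\<dots> = (\<Sum>K\<in>{K. K \<subseteq> Tx \<and> K \<noteq> {}}. lbl p ^ card K * Sm ps (mu - replicate_mset (card K) x))"
  proof (rule sum.cong)
    show "{K. K \<subseteq> T \<and> K \<noteq> {} \<and> (\<forall>t\<in>K. \<tau> t = x)} = {K. K \<subseteq> Tx \<and> K \<noteq> {}}"
      by (auto simp: Tx_def)
  next
    fix K assume K: "K \<in> {K. K \<subseteq> Tx \<and> K \<noteq> {}}"
    have "Sf (Suc ` {..<length ps}) (\<lambda>k. (p # ps) ! k) (T - K) \<tau> =
          Sf {..<length ps} ((\<lambda>k. (p # ps) ! k) \<circ> Suc) (T - K) \<tau>"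
      by (rule Sf_bij[OF bij, symmetric])
    also have "(\<lambda>k. (p # ps) ! k) \<circ> Suc = (\<lambda>k. ps ! k)" by (rule ext) simp
    also have "Sf {..<length ps} (\<lambda>k. ps ! k) (T - K) \<tau> = Sm ps (image_mset \<tau> (mset_set (T - K)))"
      using Cons.IH Cons.prems by simp
    also have "image_mset \<tau> (mset_set (T - K)) = mu - replicate_mset (card K) x"
      unfolding mu_def by (rule image_mset_set_diff) (use Cons.prems K in \<open>auto simp: Tx_def\<close>)
    finally show "lbl p ^ card K * Sf (Suc ` {..<length ps}) (\<lambda>k. (p # ps) ! k) (T - K) \<tau> =
        lbl p ^ card K * Sm ps (mu - replicate_mset (card K) x)" by simp
  qed
  also have "\<dots> = (\<Sum>k\<in>{1..card Tx}. of_nat (card Tx choose k) * (lbl p ^ k * Sm ps (mu - replicate_mset k x)))"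
    by (rule sum_subsets_card[OF fTx])
  also have "card Tx = count mu x"
    unfolding mu_def Tx_def by (rule count_image_mset_set[OF Cons.prems, symmetric])
  finally show ?case by (simp add: mu_def x_def mult.assoc)
qed

lemma Sf_cong: "(\<And>j. j \<in> J \<Longrightarrow> \<rho> j = \<rho>' j) \<Longrightarrow> Sf J \<rho> T \<tau> = Sf J \<rho>' T \<tau>"
proof -
  assume eq: "\<And>j. j \<in> J \<Longrightarrow> \<rho> j = \<rho>' j"
  have G: "Gs J \<rho> T \<tau> = Gs J \<rho>' T \<tau>" unfolding Gs_def using eq by (auto simp: PiE_iff)
  show ?thesis unfolding Sf_def G
    by (rule sum.cong[OF refl], rule prod.cong[OF refl]) (use eq in \<open>auto simp: Gs_def PiE_iff\<close>)
qed

lemma Sf_list: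
  assumes fI: "finite I" and ms: "mset ps = image_mset \<pi> (mset_set I)"
  shows "Sf {..<length ps} (\<lambda>k. ps ! k) T \<tau> = Sf I \<pi> T \<tau>"
proof -
  have "card I = size (mset ps)" using ms fI by simp
  then have cI: "card I = length ps" by simp
  obtain h where h: "bij_betw h {0..<card I} I" using ex_bij_betw_nat_finite[OF fI] by blast
  then have h': "bij_betw h {..<length ps} I" using cI by (simp add: atLeast0LessThan)
  have "image_mset (\<lambda>k. ps ! k) (mset_set {..<length ps}) = mset ps"
    by (metis map_nth mset_map mset_set_upto_eq_mset_upto lessThan_atLeast0)
  also have "\<dots> = image_mset \<pi> (mset_set (h ` {..<length ps}))" using h' ms by (simp add: bij_betw_def)
  also have "\<dots> = image_mset (\<pi> \<circ> h) (mset_set {..<length ps})"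
  proof -
    have "inj_on h {..<length ps}" using h' by (simp add: bij_betw_def)
    then have "mset_set (h ` {..<length ps}) = image_mset h (mset_set {..<length ps})"
      by (simp add: image_mset_mset_set)
    then show ?thesis by (simp add: image_mset.compositionality)
  qed
  finally obtain p where p: "p permutes {..<length ps}" and pe: "\<forall>k\<in>{..<length ps}. ps ! k = (\<pi> \<circ> h) (p k)"
    using image_mset_eq_implies_permutes[of "{..<length ps}" "\<lambda>k. ps ! k" "\<pi> \<circ> h"] by auto
  have bij: "bij_betw (h \<circ> p) {..<length ps} I"
    using bij_betw_trans[OF permutes_imp_bij[OF p] h'] .
  have "Sf I \<pi> T \<tau> = Sf {..<length ps} (\<pi> \<circ> (h \<circ> p)) T \<tau>" by (rule Sf_bij[OF bij, symmetric])
  also have "\<dots> = Sf {..<length ps} (\<lambda>k. ps ! k) T \<tau>" by (rule Sf_cong) (use pe in auto)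
  finally show ?thesis by simp
qed

lemma nth_mset: "image_mset (\<lambda>k. ts ! k) (mset_set {..<length ts}) = mset ts"
  by (metis map_nth mset_map mset_set_upto_eq_mset_upto lessThan_atLeast0)

lemma Sm_perm:
  assumes "mset ps = mset ps'"
  shows "Sm ps mu = Sm ps' mu"
proof -
  obtain ts where ts: "mset ts = mu" using ex_mset by blast
  define T where "T = {..<length ts}"
  define \<tau> where "\<tau> k = ts ! k" for k
  have "\<tau> = (\<lambda>k. ts ! k)" by (simp add: \<tau>_def fun_eq_iff)
  then have mu: "image_mset \<tau> (mset_set T) = mu" using nth_mset[of ts] ts by (simp add: T_def)
  have "Sm ps mu = Sf {..<length ps} (\<lambda>k. ps ! k) T \<tau>" using Sf_Sm[of T ps \<tau>] mu by (simp add: T_def)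
  also have "\<dots> = Sf {..<length ps'} (\<lambda>k. ps' ! k) T \<tau>"
    by (rule Sf_list) (simp_all add: assms nth_mset)
  also have "\<dots> = Sm ps' mu" using Sf_Sm[of T ps' \<tau>] mu by (simp add: T_def)
  finally show ?thesis .
qed

lemma mset_maze_list: "mset (maze_list P) = P"
  unfolding maze_list_def by (rule someI_ex) (rule ex_mset)

definition SM :: "('a, 'b::comm_ring_1) maze \<Rightarrow> 't set \<Rightarrow> ('t \<Rightarrow> 'a \<times> 'a) \<Rightarrow> 'b" where
  "SM M T \<tau> = Sm (maze_list M) (image_mset \<tau> (mset_set T))"

lemma finite_CI: "finite (comp_index_sets ps qs)"
  unfolding comp_index_sets_def
  by (rule finite_subset[of _ "Pow ({..<length ps} \<times> {..<length qs})"]) auto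

lemma comp_maze:
  fixes P Q :: "('a, 'b::comm_ring_1) maze"
  assumes fT: "finite T" and fD: "finite D" and D: "src ` set_mset P \<subseteq> D"
  shows "(\<Sum>U\<in>comp_index_sets (maze_list P) (maze_list Q). SM (comp_result (maze_list P) (maze_list Q) U) T \<tau>)
    = (\<Sum>\<sigma>\<in>T \<rightarrow>\<^sub>E D. SM P T (\<lambda>t. (\<sigma> t, snd (\<tau> t))) * SM Q T (\<lambda>t. (fst (\<tau> t), \<sigma> t)))"
proof -
  define ps where "ps = maze_list P"
  define qs where "qs = maze_list Q"
  define \<phi> where "\<phi> = (\<lambda>(i, j). (src (qs ! j), lbl (ps ! i) * lbl (qs ! j), tgt (ps ! i)))"
  define CI where "CI = comp_index_sets ps qs"
  define GP where "GP \<sigma> = Gs {..<length ps} (\<lambda>k. ps ! k) T (\<lambda>t. (\<sigma> t, snd (\<tau> t)))" for \<sigma> :: "_ \<Rightarrow> 'a"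
  define GQ where "GQ \<sigma> = Gs {..<length qs} (\<lambda>k. qs ! k) T (\<lambda>t. (fst (\<tau> t), \<sigma> t))" for \<sigma> :: "_ \<Rightarrow> 'a"
  have Dps: "\<And>i. i < length ps \<Longrightarrow> src (ps ! i) \<in> D"
  proof -
    fix i assume "i < length ps"
    then have "ps ! i \<in> set ps" by (rule nth_mem)
    then have "ps ! i \<in># P" using mset_maze_list[of P] unfolding ps_def by (metis set_mset_mset)
    then show "src (ps ! i) \<in> D" using D by auto
  qed
  have fU: "\<And>U. U \<in> CI \<Longrightarrow> finite U"
    unfolding CI_def comp_index_sets_def
    by (auto intro: finite_subset[of _ "{..<length ps} \<times> {..<length qs}"])
  have L: "SM (comp_result ps qs U) T \<tau> = Sf U \<phi> T \<tau>" if U: "U \<in> CI" for U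
  proof -
    have "SM (comp_result ps qs U) T \<tau> =
       Sf {..<length (maze_list (comp_result ps qs U))} (\<lambda>k. maze_list (comp_result ps qs U) ! k) T \<tau>"
      unfolding SM_def by (rule Sf_Sm[OF fT, symmetric])
    also have "\<dots> = Sf U \<phi> T \<tau>"
      by (rule Sf_list[OF fU[OF U]]) (simp add: mset_maze_list comp_result_def \<phi>_def)
    finally show ?thesis .
  qed
  have "(\<Sum>U\<in>CI. SM (comp_result ps qs U) T \<tau>) = (\<Sum>U\<in>CI. Sf U \<phi> T \<tau>)"
    using L by simp
  also have "\<dots> = (\<Sum>(U, f)\<in>(SIGMA U:CI. Gs U \<phi> T \<tau>). \<Prod>t\<in>T. lbl (\<phi> (f t)))"
    unfolding Sf_def by (rule sum.Sigma) (use finite_CI fU fT in \<open>auto simp: CI_def intro: finite_Gs\<close>)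
  also have "\<dots> = (\<Sum>(\<sigma>, g, h)\<in>(SIGMA \<sigma>:T \<rightarrow>\<^sub>E D. GP \<sigma> \<times> GQ \<sigma>).
        (\<Prod>t\<in>T. lbl (ps ! g t)) * (\<Prod>t\<in>T. lbl (qs ! h t)))"
  proof (rule sum.reindex_bij_witness[of _
      "\<lambda>(\<sigma>, g, h). ((\<lambda>t. if t \<in> T then (g t, h t) else undefined) ` T, (\<lambda>t. if t \<in> T then (g t, h t) else undefined))"
      "\<lambda>(U, f). (\<lambda>t. if t \<in> T then src (ps ! fst (f t)) else undefined,
                  \<lambda>t. if t \<in> T then fst (f t) else undefined,
                  \<lambda>t. if t \<in> T then snd (f t) else undefined)"])
    fix a assume a: "a \<in> (SIGMA U:CI. Gs U \<phi> T \<tau>)"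
    then obtain U f where af: "a = (U, f)" and U: "U \<in> CI" and f: "f \<in> Gs U \<phi> T \<tau>" by auto
    from f have fU: "\<And>t. t \<in> T \<Longrightarrow> f t \<in> U" and fE: "\<And>t. t \<notin> T \<Longrightarrow> f t = undefined"
      and fim: "f ` T = U" and fc: "\<And>t. t \<in> T \<Longrightarrow> pr (\<phi> (f t)) = \<tau> t"
      by (auto simp: Gs_def PiE_iff extensional_def)
    from U have Ucomp: "\<And>i j. (i, j) \<in> U \<Longrightarrow> i < length ps \<and> j < length qs \<and> src (ps ! i) = tgt (qs ! j)"
      and U1: "fst ` U = {..<length ps}" and U2: "snd ` U = {..<length qs}"
      by (auto simp: CI_def comp_index_sets_def)
    have fsplit: "\<And>t. t \<in> T \<Longrightarrow> f t = (fst (f t), snd (f t))" by simp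
    have fc': "\<And>t. t \<in> T \<Longrightarrow> src (qs ! snd (f t)) = fst (\<tau> t) \<and> tgt (ps ! fst (f t)) = snd (\<tau> t)"
    proof -
      fix t assume t: "t \<in> T"
      obtain i j where ij: "f t = (i, j)" by (cases "f t") auto
      have "(src (qs ! j), tgt (ps ! i)) = \<tau> t" using fc[OF t] ij
        by (simp add: \<phi>_def pr_def src_def tgt_def)
      then have "\<tau> t = (src (qs ! j), tgt (ps ! i))" by simp
      then show "src (qs ! snd (f t)) = fst (\<tau> t) \<and> tgt (ps ! fst (f t)) = snd (\<tau> t)"
        by (simp add: ij)
    qed
    define g where "g = (\<lambda>t. if t \<in> T then fst (f t) else undefined)"
    define h where "h = (\<lambda>t. if t \<in> T then snd (f t) else undefined)"
    define \<sigma> where "\<sigma> = (\<lambda>t. if t \<in> T then src (ps ! fst (f t)) else undefined)"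
    have mk: "(\<lambda>t. if t \<in> T then (g t, h t) else undefined) = f"
      by (rule ext) (auto simp: g_def h_def fE)
    show "(case case a of (U, f) \<Rightarrow> (\<lambda>t. if t \<in> T then src (ps ! fst (f t)) else undefined,
                  \<lambda>t. if t \<in> T then fst (f t) else undefined,
                  \<lambda>t. if t \<in> T then snd (f t) else undefined) of
          (\<sigma>, g, h) \<Rightarrow> ((\<lambda>t. if t \<in> T then (g t, h t) else undefined) ` T, (\<lambda>t. if t \<in> T then (g t, h t) else undefined))) = a"
      unfolding af prod.case g_def[symmetric] h_def[symmetric] mk using fim by simp
    have fUc: "\<And>t. t \<in> T \<Longrightarrow> fst (f t) < length ps \<and> snd (f t) < length qs \<and> src (ps ! fst (f t)) = tgt (qs ! snd (f t))"
      using fU Ucomp by (metis prod.collapse)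
    have sD: "\<And>t. t \<in> T \<Longrightarrow> src (ps ! fst (f t)) \<in> D" using fUc Dps by blast
    have "\<sigma> \<in> T \<rightarrow>\<^sub>E D" using sD by (auto simp: \<sigma>_def PiE_iff extensional_def simp del: fUc)
    moreover have "g \<in> GP \<sigma>"
    proof -
      have "g ` T = fst ` U" using fim by (auto simp: g_def image_image)
      then show ?thesis unfolding GP_def Gs_def using fUc fc' U1
        by (auto simp: g_def \<sigma>_def PiE_iff extensional_def pr_def)
    qed
    moreover have "h \<in> GQ \<sigma>"
    proof -
      have "h ` T = snd ` U" using fim by (auto simp: h_def image_image)
      then show ?thesis unfolding GQ_def Gs_def using fUc fc' U2
        by (auto simp: h_def \<sigma>_def PiE_iff extensional_def pr_def)
    qed
    ultimately show "(case a of (U, f) \<Rightarrow> (\<lambda>t. if t \<in> T then src (ps ! fst (f t)) else undefined,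
                  \<lambda>t. if t \<in> T then fst (f t) else undefined,
                  \<lambda>t. if t \<in> T then snd (f t) else undefined)) \<in> (SIGMA \<sigma>:T \<rightarrow>\<^sub>E D. GP \<sigma> \<times> GQ \<sigma>)"
      unfolding af prod.case \<sigma>_def[symmetric] g_def[symmetric] h_def[symmetric] by simp
    show "(case case a of (U, f) \<Rightarrow> (\<lambda>t. if t \<in> T then src (ps ! fst (f t)) else undefined,
                  \<lambda>t. if t \<in> T then fst (f t) else undefined,
                  \<lambda>t. if t \<in> T then snd (f t) else undefined) of
          (\<sigma>, g, h) \<Rightarrow> (\<Prod>t\<in>T. lbl (ps ! g t)) * (\<Prod>t\<in>T. lbl (qs ! h t))) =
        (case a of (U, f) \<Rightarrow> \<Prod>t\<in>T. lbl (\<phi> (f t)))"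
      unfolding af prod.case g_def[symmetric] h_def[symmetric]
      by (simp add: prod.distrib[symmetric] g_def h_def \<phi>_def lbl_def case_prod_unfold cong: prod.cong)
  next
    fix b assume b: "b \<in> (SIGMA \<sigma>:T \<rightarrow>\<^sub>E D. GP \<sigma> \<times> GQ \<sigma>)"
    then obtain \<sigma> g h where bf: "b = (\<sigma>, g, h)" and \<sigma>: "\<sigma> \<in> T \<rightarrow>\<^sub>E D" and g: "g \<in> GP \<sigma>" and h: "h \<in> GQ \<sigma>"
      by auto
    from \<sigma> have \<sigma>E: "\<And>t. t \<notin> T \<Longrightarrow> \<sigma> t = undefined" by (auto simp: PiE_iff extensional_def)
    from g have gT: "\<And>t. t \<in> T \<Longrightarrow> g t < length ps" and gE: "\<And>t. t \<notin> T \<Longrightarrow> g t = undefined"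
      and gim: "g ` T = {..<length ps}" and gc: "\<And>t. t \<in> T \<Longrightarrow> src (ps ! g t) = \<sigma> t \<and> tgt (ps ! g t) = snd (\<tau> t)"
      by (auto simp: GP_def Gs_def PiE_iff extensional_def pr_def)
    from h have hT: "\<And>t. t \<in> T \<Longrightarrow> h t < length qs" and hE: "\<And>t. t \<notin> T \<Longrightarrow> h t = undefined"
      and him: "h ` T = {..<length qs}" and hc: "\<And>t. t \<in> T \<Longrightarrow> src (qs ! h t) = fst (\<tau> t) \<and> tgt (qs ! h t) = \<sigma> t"
      by (auto simp: GQ_def Gs_def PiE_iff extensional_def pr_def)
    define f where "f = (\<lambda>t. if t \<in> T then (g t, h t) else undefined)"
    show "(case case b of (\<sigma>, g, h) \<Rightarrow> ((\<lambda>t. if t \<in> T then (g t, h t) else undefined) ` T, (\<lambda>t. if t \<in> T then (g t, h t) else undefined)) of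
          (U, f) \<Rightarrow> (\<lambda>t. if t \<in> T then src (ps ! fst (f t)) else undefined,
                  \<lambda>t. if t \<in> T then fst (f t) else undefined,
                  \<lambda>t. if t \<in> T then snd (f t) else undefined)) = b"
      unfolding bf prod.case f_def[symmetric]
      by (auto simp: f_def gc \<sigma>E gE hE intro!: ext)
    have "f ` T \<in> CI"
    proof -
      have "fst ` f ` T = g ` T" "snd ` f ` T = h ` T" by (force simp: f_def image_image)+
      then show ?thesis unfolding CI_def comp_index_sets_def using gT hT gc hc gim him
        by (auto simp: f_def)
    qed
    moreover have "f \<in> Gs (f ` T) \<phi> T \<tau>"
      unfolding Gs_def using gc hc by (auto simp: f_def PiE_iff extensional_def \<phi>_def pr_def src_def tgt_def)
    ultimately show "(case b of (\<sigma>, g, h) \<Rightarrow> ((\<lambda>t. if t \<in> T then (g t, h t) else undefined) ` T, (\<lambda>t. if t \<in> T then (g t, h t) else undefined)))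
        \<in> (SIGMA U:CI. Gs U \<phi> T \<tau>)"
      unfolding bf prod.case f_def[symmetric] by simp
  qed
  also have "\<dots> = (\<Sum>\<sigma>\<in>T \<rightarrow>\<^sub>E D. \<Sum>(g, h)\<in>GP \<sigma> \<times> GQ \<sigma>. (\<Prod>t\<in>T. lbl (ps ! g t)) * (\<Prod>t\<in>T. lbl (qs ! h t)))"
    by (rule sum.Sigma[symmetric]) (use fT fD in \<open>auto simp: GP_def GQ_def intro!: finite_Gs finite_PiE\<close>)
  also have "\<dots> = (\<Sum>\<sigma>\<in>T \<rightarrow>\<^sub>E D. SM P T (\<lambda>t. (\<sigma> t, snd (\<tau> t))) * SM Q T (\<lambda>t. (fst (\<tau> t), \<sigma> t)))"
  proof (rule sum.cong[OF refl])
    fix \<sigma> :: "_ \<Rightarrow> 'a"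
    have "SM P T (\<lambda>t. (\<sigma> t, snd (\<tau> t))) = (\<Sum>g\<in>GP \<sigma>. \<Prod>t\<in>T. lbl (ps ! g t))"
      unfolding SM_def GP_def ps_def Sf_Sm[OF fT, symmetric] Sf_def ..
    moreover have "SM Q T (\<lambda>t. (fst (\<tau> t), \<sigma> t)) = (\<Sum>h\<in>GQ \<sigma>. \<Prod>t\<in>T. lbl (qs ! h t))"
      unfolding SM_def GQ_def qs_def Sf_Sm[OF fT, symmetric] Sf_def ..
    ultimately show "(\<Sum>(g, h)\<in>GP \<sigma> \<times> GQ \<sigma>. (\<Prod>t\<in>T. lbl (ps ! g t)) * (\<Prod>t\<in>T. lbl (qs ! h t))) =
        SM P T (\<lambda>t. (\<sigma> t, snd (\<tau> t))) * SM Q T (\<lambda>t. (fst (\<tau> t), \<sigma> t))"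
      by (simp add: sum_product sum.cartesian_product)
  qed
  finally show ?thesis by (simp add: ps_def qs_def CI_def)
qed

definition Tf :: "('a, 'b::comm_ring_1) laby \<Rightarrow> 't set \<Rightarrow> ('t \<Rightarrow> 'a \<times> 'a) \<Rightarrow> 'b" where
  "Tf F T \<tau> = (\<Sum>M\<in>supp F. F M * SM M T \<tau>)"

lemma Tf_superset:
  assumes "finite S" "supp F \<subseteq> S"
  shows "Tf F T \<tau> = (\<Sum>M\<in>S. F M * SM M T \<tau>)"
  unfolding Tf_def by (rule sum.mono_neutral_left) (use assms in \<open>auto simp: supp_def\<close>)

lemma comp_supp_fin:
  fixes F G :: "('a, 'b::comm_ring_1) laby"
  assumes fF: "finite (supp F)" and fG: "finite (supp G)"
  defines "S \<equiv> (\<Union>P\<in>supp F. \<Union>Q\<in>supp G. comp_result (maze_list P) (maze_list Q) ` comp_index_sets (maze_list P) (maze_list Q))"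
  shows "finite S" and "supp (laby_comp F G) \<subseteq> S"
proof -
  show "finite S" unfolding S_def using fF fG finite_CI by (intro finite_UN_I finite_imageI) auto
  show "supp (laby_comp F G) \<subseteq> S"
  proof
    fix M assume M: "M \<in> supp (laby_comp F G)"
    show "M \<in> S"
    proof (rule ccontr)
      assume MS: "M \<notin> S"
      have "maze_comp P Q M = 0" if P: "P \<in> supp F" and Q: "Q \<in> supp G" for P Q
      proof -
        have "M \<notin> comp_result (maze_list P) (maze_list Q) ` comp_index_sets (maze_list P) (maze_list Q)"
          using MS P Q unfolding S_def by (meson UN_I)
        then have "{U \<in> comp_index_sets (maze_list P) (maze_list Q). comp_result (maze_list P) (maze_list Q) U = M} = {}"
          by (auto intro: image_eqI)
        then show ?thesis unfolding maze_comp_def by (metis card.empty of_nat_0)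
      qed
      then have "laby_comp F G M = 0" unfolding laby_comp_def by simp
      with M show False by (simp add: supp_def)
    qed
  qed
qed

lemma Tf_comp:
  fixes F G :: "('a, 'b::comm_ring_1) laby"
  assumes fF: "finite (supp F)" and fG: "finite (supp G)" and fT: "finite T"
  defines "D \<equiv> (\<Union>P\<in>supp F. src ` set_mset P)"
  shows "Tf (laby_comp F G) T \<tau> =
    (\<Sum>\<sigma>\<in>T \<rightarrow>\<^sub>E D. Tf F T (\<lambda>t. (\<sigma> t, snd (\<tau> t))) * Tf G T (\<lambda>t. (fst (\<tau> t), \<sigma> t)))"
proof -
  define S where "S = (\<Union>P\<in>supp F. \<Union>Q\<in>supp G. comp_result (maze_list P) (maze_list Q) ` comp_index_sets (maze_list P) (maze_list Q))"
  have fS: "finite S" and sS: "supp (laby_comp F G) \<subseteq> S"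
    using comp_supp_fin[OF fF fG] by (simp_all add: S_def)
  have fD: "finite D" unfolding D_def using fF by blast
  define X where "X \<sigma> P Q = (F P * SM P T (\<lambda>t. (\<sigma> t, snd (\<tau> t)))) * (G Q * SM Q T (\<lambda>t. (fst (\<tau> t), \<sigma> t)))"
    for \<sigma> :: "_ \<Rightarrow> 'a" and P Q
  have key: "(\<Sum>M\<in>S. maze_comp P Q M * SM M T \<tau>') =
      (\<Sum>\<sigma>\<in>T \<rightarrow>\<^sub>E D. SM P T (\<lambda>t. (\<sigma> t, snd (\<tau>' t))) * SM Q T (\<lambda>t. (fst (\<tau>' t), \<sigma> t)))"
    if P: "P \<in> supp F" and Q: "Q \<in> supp G" for P Q \<tau>'
  proof -
    define CI where "CI = comp_index_sets (maze_list P) (maze_list Q)"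
    define cr where "cr = comp_result (maze_list P) (maze_list Q)"
    have sub: "cr ` CI \<subseteq> S" unfolding S_def CI_def cr_def using P Q by blast
    have "(\<Sum>M\<in>S. maze_comp P Q M * SM M T \<tau>') = (\<Sum>M\<in>S. \<Sum>U\<in>{U. U \<in> CI \<and> cr U = M}. SM (cr U) T \<tau>')"
      by (rule sum.cong[OF refl]) (simp add: maze_comp_def CI_def cr_def)
    also have "\<dots> = (\<Sum>U\<in>CI. SM (cr U) T \<tau>')"
      by (rule sum.group[OF _ fS sub]) (simp add: CI_def finite_CI)
    also have "\<dots> = (\<Sum>\<sigma>\<in>T \<rightarrow>\<^sub>E D. SM P T (\<lambda>t. (\<sigma> t, snd (\<tau>' t))) * SM Q T (\<lambda>t. (fst (\<tau>' t), \<sigma> t)))"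
      unfolding CI_def cr_def by (rule comp_maze[OF fT fD]) (use P in \<open>auto simp: D_def\<close>)
    finally show ?thesis .
  qed
  have "Tf (laby_comp F G) T \<tau> = (\<Sum>M\<in>S. laby_comp F G M * SM M T \<tau>)"
    by (rule Tf_superset[OF fS sS])
  also have "\<dots> = (\<Sum>M\<in>S. \<Sum>P\<in>supp F. \<Sum>Q\<in>supp G. F P * G Q * (maze_comp P Q M * SM M T \<tau>))"
    by (simp add: laby_comp_def sum_distrib_right mult.assoc)
  also have "\<dots> = (\<Sum>P\<in>supp F. \<Sum>M\<in>S. \<Sum>Q\<in>supp G. F P * G Q * (maze_comp P Q M * SM M T \<tau>))"
    by (rule sum.swap)
  also have "\<dots> = (\<Sum>P\<in>supp F. \<Sum>Q\<in>supp G. \<Sum>M\<in>S. F P * G Q * (maze_comp P Q M * SM M T \<tau>))"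
    by (rule sum.cong[OF refl], rule sum.swap)
  also have "\<dots> = (\<Sum>P\<in>supp F. \<Sum>Q\<in>supp G. F P * G Q * (\<Sum>M\<in>S. maze_comp P Q M * SM M T \<tau>))"
    by (simp only: sum_distrib_left)
  also have "\<dots> = (\<Sum>P\<in>supp F. \<Sum>Q\<in>supp G. F P * G Q *
      (\<Sum>\<sigma>\<in>T \<rightarrow>\<^sub>E D. SM P T (\<lambda>t. (\<sigma> t, snd (\<tau> t))) * SM Q T (\<lambda>t. (fst (\<tau> t), \<sigma> t))))"
    by (intro sum.cong refl) (simp add: key)
  also have "\<dots> = (\<Sum>P\<in>supp F. \<Sum>Q\<in>supp G. \<Sum>\<sigma>\<in>T \<rightarrow>\<^sub>E D. X \<sigma> P Q)"
    by (simp add: X_def sum_distrib_left mult_ac)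
  also have "\<dots> = (\<Sum>P\<in>supp F. \<Sum>\<sigma>\<in>T \<rightarrow>\<^sub>E D. \<Sum>Q\<in>supp G. X \<sigma> P Q)"
    by (rule sum.cong[OF refl], rule sum.swap)
  also have "\<dots> = (\<Sum>\<sigma>\<in>T \<rightarrow>\<^sub>E D. \<Sum>P\<in>supp F. \<Sum>Q\<in>supp G. X \<sigma> P Q)"
    by (rule sum.swap)
  also have "\<dots> = (\<Sum>\<sigma>\<in>T \<rightarrow>\<^sub>E D. Tf F T (\<lambda>t. (\<sigma> t, snd (\<tau> t))) * Tf G T (\<lambda>t. (fst (\<tau> t), \<sigma> t)))"
    unfolding Tf_def X_def by (simp only: sum_product)
  finally show ?thesis .
qed

lemma comb_sum:
  assumes "finite S" "X \<in> S"
  shows "(\<Sum>M\<in>S. maze_comb X M * f M) = (f X :: 'b::comm_ring_1)"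
proof -
  have "(\<Sum>M\<in>S. maze_comb X M * f M) = (\<Sum>M\<in>S. if M = X then f M else 0)"
    by (rule sum.cong) (auto simp: maze_comb_def)
  also have "\<dots> = f X" using assms by (simp add: sum.delta')
  finally show ?thesis .
qed

lemma size_image_T: "finite T \<Longrightarrow> size (image_mset \<tau> (mset_set T)) = card T"
  by simp

lemma Tf_rel_zero:
  fixes R :: "('a, 'b::binomial_ring) laby"
  assumes R: "R \<in> laby_n_rel n X Y" and fT: "finite T" and cT: "card T = n"
  shows "Tf R T \<tau> = 0" and "finite (supp R)"
proof -
  define mu where "mu = image_mset \<tau> (mset_set T)"
  have smu: "size mu = n" using fT cT by (simp add: mu_def)
  have "Tf R T \<tau> = 0 \<and> finite (supp R)"
  proof (cases "\<exists>P. R = maze_comb P \<and> size P > n")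
    case True
    then obtain P where RP: "R = maze_comb P" and sP: "size P > n" by blast
    have sub: "supp R \<subseteq> {P}" by (auto simp: RP supp_def maze_comb_def)
    have "Tf R T \<tau> = (\<Sum>M\<in>{P}. R M * SM M T \<tau>)" by (rule Tf_superset[OF _ sub]) simp
    also have "\<dots> = SM P T \<tau>" by (simp add: RP maze_comb_def)
    also have "\<dots> = 0" unfolding SM_def
    proof (rule Sm_big)
      have "length (maze_list P) = size P" using mset_maze_list[of P] by (metis size_mset)
      then show "size (image_mset \<tau> (mset_set T)) < length (maze_list P)" using sP smu by (simp add: mu_def)
    qed
    finally show ?thesis using finite_subset[OF sub] by simp
  next
    case False
    with R obtain P where RP: "R = rel_IV n P" by (auto simp: laby_n_rel_def)
    define ps where "ps = maze_list P"
    define A where "A = assignments n ps"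
    define c where "c ds = (\<Prod>(p, d)\<leftarrow>zip ps ds. bchoose (lbl p) d)" for ds
    define S where "S = insert P (unit_maze ps ` A)"
    have fA: "finite A" by (simp add: A_def finite_assignments)
    have fS: "finite S" using fA by (simp add: S_def)
    have Rdef: "R M = maze_comb P M - (\<Sum>ds\<in>A. c ds * maze_comb (unit_maze ps ds) M)" for M
      by (simp add: RP rel_IV_def A_def c_def ps_def)
    have sub: "supp R \<subseteq> S"
    proof
      fix M assume M: "M \<in> supp R"
      show "M \<in> S"
      proof (rule ccontr)
        assume "M \<notin> S"
        then have "maze_comb P M = 0" "\<And>ds. ds \<in> A \<Longrightarrow> maze_comb (unit_maze ps ds) M = 0"
          by (auto simp: S_def maze_comb_def)
        then have "R M = 0" by (simp add: Rdef)
        with M show False by (simp add: supp_def)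
      qed
    qed
    have SMu: "SM (unit_maze ps ds) T \<tau> = Sm (ulist ps ds) mu" for ds
      unfolding SM_def mu_def[symmetric]
      by (rule Sm_perm) (simp add: mset_maze_list unit_maze_ulist)
    have "Tf R T \<tau> = (\<Sum>M\<in>S. R M * SM M T \<tau>)" by (rule Tf_superset[OF fS sub])
    also have "\<dots> = (\<Sum>M\<in>S. maze_comb P M * SM M T \<tau>) -
        (\<Sum>ds\<in>A. c ds * (\<Sum>M\<in>S. maze_comb (unit_maze ps ds) M * SM M T \<tau>))"
      by (simp add: Rdef algebra_simps sum_subtractf sum_distrib_left sum_distrib_right sum.swap[of _ S])
    also have "\<dots> = SM P T \<tau> - (\<Sum>ds\<in>A. c ds * SM (unit_maze ps ds) T \<tau>)"
      using fS by (simp add: comb_sum S_def)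
    also have "\<dots> = Sm ps mu - (\<Sum>ds\<in>A. c ds * Sm (ulist ps ds) mu)"
      unfolding SMu by (simp add: SM_def ps_def mu_def)
    also have "\<dots> = 0"
      using Sm_rel[of mu n ps] smu by (simp add: A_def c_def)
    finally show ?thesis using finite_subset[OF sub fS] by simp
  qed
  then show "Tf R T \<tau> = 0" and "finite (supp R)" by simp_all
qed

lemma ariadne_mor_Tf:
  fixes H :: "('a, 'b::comm_ring_1) laby"
  assumes "mset ts = mu" "length ts = n"
  shows "ariadne_mor n H mu = Tf H {..<n} (\<lambda>k. ts ! k)"
proof -
  have mu: "image_mset (\<lambda>k. ts ! k) (mset_set {..<n}) = mu" using nth_mset[of ts] assms by simp
  have sz: "size mu = n" using assms by auto
  show ?thesis unfolding ariadne_mor_def Tf_def SM_def mu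
    by (simp add: ariadne_Sm sz)
qed

theorem mainTheorem9:
  fixes n :: nat
    and W X Y Z :: "'a set"
    and F G R :: "('a, 'b::binomial_ring) laby"
  assumes "laby_mor W X G"
    and "laby_mor Y Z F"
    and "R \<in> laby_n_rel n X Y"
  shows "ariadne_mor n (laby_comp F (laby_comp R G)) = (\<lambda>mu. 0)"
proof
  fix mu :: "('a \<times> 'a) multiset"
  have fG: "finite (supp G)" and fF: "finite (supp F)" using assms(1,2) by (simp_all add: laby_mor_def)
  define T where "T = {..<n}"
  have fT: "finite T" and cT: "card T = n" by (simp_all add: T_def)
  have fR: "finite (supp R)" using Tf_rel_zero(2)[OF assms(3) fT cT] .
  have fRG: "finite (supp (laby_comp R G))"
    using comp_supp_fin[OF fR fG] finite_subset by blast
  have RG0: "Tf (laby_comp R G) T \<tau> = 0" for \<tau> :: "nat \<Rightarrow> 'a \<times> 'a"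
    by (simp add: Tf_comp[OF fR fG fT] Tf_rel_zero(1)[OF assms(3) fT cT])
  show "ariadne_mor n (laby_comp F (laby_comp R G)) mu = 0"
  proof (cases "size mu = n")
    case True
    obtain ts where ts: "mset ts = mu" using ex_mset by blast
    then have lts: "length ts = n" using True by auto
    show ?thesis
      by (simp add: ariadne_mor_Tf[OF ts lts] T_def[symmetric] Tf_comp[OF fF fRG fT] RG0)
  next
    case False
    then show ?thesis by (simp add: ariadne_mor_def ariadne_Sm)
  qed
qed

end
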